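(* Let $X=(X_1,\ldots,X_d)$, $d\ge2$, be a centered Gaussian random vector with positive definite covariance matrix $\Gamma=(\gamma_{jk})_{j,k=1}^d$. Then $$\mathbb{E}\Big[\min_{j=1,\ldots,d}\exp\big(X_j-\tfrac12\gamma_{jj}\big)\Big]=\sum_{j=1}^d\Phi_{d-1}\Big(\big(-\tfrac12\operatorname{var}(\Delta^{(j)}_k)\big)_{k:k\ne j};\ \operatorname{cov}(\Delta^{(j)})\Big),$$ where $\Delta^{(j)}=(\Delta^{(j)}_k)_{k:k\ne j}$ with $\Delta^{(j)}_k=X_j-X_k$.
   Context: $\Phi_r(\mathbf{a};\Sigma)$ denotes the cumulative distribution function, evaluated at $\mathbf{a}\in\mathbb{R}^r$, of the $r$-variate centered normal distribution with covariance matrix $\Sigma$. *)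

theory Defs
  imports "HOL-Probability.Probability" "Jordan_Normal_Form.Determinant"
    "Jordan_Normal_Form.Gauss_Jordan_Elimination"
begin

text \<open>Vectors in R^r are functions on the index set {..<r}; the measurable space
  of such vectors is the product PiM {..<r} (\<lambda>_. lborel).
  An r x r matrix is a function nat => nat => real (only indices < r matter).\<close>

definition sq_matrix :: "nat \<Rightarrow> (nat \<Rightarrow> nat \<Rightarrow> real) \<Rightarrow> real mat" where
  "sq_matrix r S = Matrix.mat r r (\<lambda>(i, k). S i k)"

definition pos_def_mat :: "nat \<Rightarrow> (nat \<Rightarrow> nat \<Rightarrow> real) \<Rightarrow> bool" where
  "pos_def_mat r S \<longleftrightarrow>
     (\<forall>i<r. \<forall>k<r. S i k = S k i) \<and>
     (\<forall>x::nat \<Rightarrow> real. (\<exists>i<r. x i \<noteq> 0) \<longrightarrow> (\<Sum>i<r. \<Sum>k<r. x i * S i k * x k) > 0)"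

definition gauss_density :: "nat \<Rightarrow> (nat \<Rightarrow> nat \<Rightarrow> real) \<Rightarrow> (nat \<Rightarrow> real) \<Rightarrow> real" where
  "gauss_density r S x =
     (let Sinv = the (mat_inverse (sq_matrix r S)) in
       (2 * pi) powr (- real r / 2) * Determinant.det (sq_matrix r S) powr (- 1 / 2) *
       exp (- (1 / 2) * (\<Sum>i<r. \<Sum>k<r. x i * Sinv $$ (i, k) * x k)))"

definition gauss_measure :: "nat \<Rightarrow> (nat \<Rightarrow> nat \<Rightarrow> real) \<Rightarrow> (nat \<Rightarrow> real) measure" where
  "gauss_measure r S = density (PiM {..<r} (\<lambda>_. lborel)) (\<lambda>x. ennreal (gauss_density r S x))"

definition Phi :: "nat \<Rightarrow> (nat \<Rightarrow> real) \<Rightarrow> (nat \<Rightarrow> nat \<Rightarrow> real) \<Rightarrow> real" where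
  "Phi r a S = measure (gauss_measure r S)
     {x \<in> space (PiM {..<r} (\<lambda>_. lborel)). \<forall>i<r. x i \<le> a i}"

definition covar :: "'a measure \<Rightarrow> ('a \<Rightarrow> real) \<Rightarrow> ('a \<Rightarrow> real) \<Rightarrow> real" where
  "covar M U V = (\<integral>\<omega>. (U \<omega> - (\<integral>\<omega>'. U \<omega>' \<partial>M)) * (V \<omega> - (\<integral>\<omega>'. V \<omega>' \<partial>M)) \<partial>M)"

definition var :: "'a measure \<Rightarrow> ('a \<Rightarrow> real) \<Rightarrow> real" where
  "var M U = covar M U U"

text \<open>Enumeration of {k. k \<noteq> j} in increasing order: index i < d-1 corresponds to k.\<close>
definition skip :: "nat \<Rightarrow> nat \<Rightarrow> nat" where
  "skip j i = (if i < j then i else Suc i)"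

end

theory Submission
  imports Defs
begin


definition qf :: "nat \<Rightarrow> (nat \<Rightarrow> nat \<Rightarrow> real) \<Rightarrow> (nat \<Rightarrow> real) \<Rightarrow> real" where
  "qf n P x = (\<Sum>i<n. \<Sum>k<n. x i * P i k * x k)"

definition schur :: "nat \<Rightarrow> (nat \<Rightarrow> nat \<Rightarrow> real) \<Rightarrow> nat \<Rightarrow> nat \<Rightarrow> real" where
  "schur n P i k = P i k - P i n * P n k / P n n"

definition lin :: "nat \<Rightarrow> (nat \<Rightarrow> real) \<Rightarrow> (nat \<Rightarrow> real) \<Rightarrow> real" where
  "lin n c x = (\<Sum>i<n. c i * x i)"

definition isinv :: "nat \<Rightarrow> (nat \<Rightarrow> nat \<Rightarrow> real) \<Rightarrow> (nat \<Rightarrow> nat \<Rightarrow> real) \<Rightarrow> bool" where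
  "isinv n P S \<longleftrightarrow> (\<forall>i<n. \<forall>k<n. (\<Sum>l<n. P i l * S l k) = (if i = k then 1 else 0)) \<and>
                    (\<forall>i<n. \<forall>k<n. (\<Sum>l<n. S i l * P l k) = (if i = k then 1 else 0))"

definition symm :: "nat \<Rightarrow> (nat \<Rightarrow> nat \<Rightarrow> real) \<Rightarrow> bool" where
  "symm n P \<longleftrightarrow> (\<forall>i<n. \<forall>k<n. P i k = P k i)"

lemma pd_iff: "pos_def_mat n P \<longleftrightarrow> symm n P \<and> (\<forall>x. (\<exists>i<n. x i \<noteq> 0) \<longrightarrow> qf n P x > 0)"
  unfolding pos_def_mat_def symm_def qf_def by simp

lemma pd_pos: assumes "pos_def_mat n P" "i < n" "x i \<noteq> 0" shows "qf n P x > 0"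
proof -
  have "\<forall>x. (\<exists>i<n. x i \<noteq> 0) \<longrightarrow> qf n P x > 0" using assms(1) unfolding pd_iff by (rule conjunct2)
  thus ?thesis using assms(2,3) by blast
qed

lemma pd_symm: "pos_def_mat n P \<Longrightarrow> symm n P"
  unfolding pd_iff by (rule conjunct1)

lemma qf_cong: "(\<And>i. i < n \<Longrightarrow> x i = y i) \<Longrightarrow> qf n P x = qf n P y"
  unfolding qf_def by (auto intro!: sum.cong)

lemma lin_cong: "(\<And>i. i < n \<Longrightarrow> x i = y i) \<Longrightarrow> lin n c x = lin n c y"
  unfolding lin_def by (auto intro!: sum.cong)

lemma qf_Suc: "qf (Suc n) P x = qf n P x + x n * lin n (P n) x + (\<Sum>i<n. x i * P i n) * x n + x n * P n n * x n"
  unfolding qf_def lin_def by (simp add: sum.distrib sum_distrib_left sum_distrib_right algebra_simps)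

lemma qf_schur: "qf n (schur n P) x = qf n P x - (\<Sum>i<n. x i * P i n) * lin n (P n) x / P n n"
proof -
  have "qf n (schur n P) x = (\<Sum>i<n. \<Sum>k<n. x i * P i k * x k - (x i * P i n) * (P n k * x k) / P n n)"
    unfolding qf_def schur_def by (intro sum.cong refl) (simp add: algebra_simps)
  also have "\<dots> = qf n P x - (\<Sum>i<n. \<Sum>k<n. (x i * P i n) * (P n k * x k)) / P n n"
    unfolding qf_def by (simp add: sum_subtractf sum_divide_distrib)
  also have "(\<Sum>i<n. \<Sum>k<n. (x i * P i n) * (P n k * x k)) = (\<Sum>i<n. x i * P i n) * lin n (P n) x"
    unfolding lin_def by (simp add: sum_product)
  finally show ?thesis .
qed

lemma qf_complete:
  assumes "symm (Suc n) P" "P n n \<noteq> 0"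
  shows "qf (Suc n) P x = qf n (schur n P) x + P n n * (x n + lin n (P n) x / P n n)^2"
proof -
  have s: "(\<Sum>i<n. x i * P i n) = lin n (P n) x"
    unfolding lin_def using assms(1) by (intro sum.cong) (auto simp: symm_def)
  show ?thesis unfolding qf_Suc qf_schur s using assms(2)
    by (simp add: field_simps power2_eq_square)
qed

lemma pd_diag: assumes "pos_def_mat (Suc n) P" shows "P n n > 0"
proof -
  let ?x = "\<lambda>i. if i = n then 1 else (0::real)"
  have "qf (Suc n) P ?x > 0" by (rule pd_pos[OF assms, of n]) auto
  moreover have "qf (Suc n) P ?x = P n n" unfolding qf_Suc
    by (simp add: qf_def lin_def)
  ultimately show ?thesis by simp
qed

lemma pd_schur: assumes "pos_def_mat (Suc n) P" shows "pos_def_mat n (schur n P)"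
proof -
  have sy: "symm (Suc n) P" using pd_symm[OF assms] .
  have p: "P n n > 0" using pd_diag[OF assms] .
  have "symm n (schur n P)" using sy unfolding symm_def schur_def by (auto simp: mult.commute)
  moreover have "qf n (schur n P) x > 0" if ex: "\<exists>i<n. x i \<noteq> 0" for x
  proof -
    let ?y = "x(n := - lin n (P n) x / P n n)"
    obtain i where i: "i < n" "x i \<noteq> 0" using ex by blast
    have "qf (Suc n) P ?y > 0" by (rule pd_pos[OF assms, of i]) (use i in auto)
    also have "qf (Suc n) P ?y = qf n (schur n P) ?y + P n n * (?y n + lin n (P n) ?y / P n n)^2"
      by (rule qf_complete[OF sy]) (use p in auto)
    also have "qf n (schur n P) ?y = qf n (schur n P) x" by (rule qf_cong) auto
    also have "lin n (P n) ?y = lin n (P n) x" by (rule lin_cong) auto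
    finally show ?thesis by simp
  qed
  ultimately show ?thesis unfolding pd_iff by (intro conjI allI impI) auto
qed

lemma isinv_schur:
  assumes inv: "isinv (Suc n) P S" and p: "P n n \<noteq> 0"
  shows "isinv n (schur n P) S"
proof -
  have A: "(\<Sum>l<n. P i l * S l k) + P i n * S n k = (if i = k then 1 else 0)" if "i < Suc n" "k < Suc n" for i k
    using inv that unfolding isinv_def by auto
  have B: "(\<Sum>l<n. S i l * P l k) + S i n * P n k = (if i = k then 1 else 0)" if "i < Suc n" "k < Suc n" for i k
    using inv that unfolding isinv_def by auto
  have "(\<Sum>l<n. schur n P i l * S l k) = (if i = k then 1 else 0)" if "i < n" "k < n" for i k
  proof -
    have "(\<Sum>l<n. schur n P i l * S l k) = (\<Sum>l<n. P i l * S l k) - P i n / P n n * (\<Sum>l<n. P n l * S l k)"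
      unfolding schur_def by (simp add: sum_subtractf sum_distrib_left algebra_simps)
    also have "(\<Sum>l<n. P n l * S l k) = - P n n * S n k" using A[of n k] that by auto
    also have "(\<Sum>l<n. P i l * S l k) = (if i = k then 1 else 0) - P i n * S n k" using A[of i k] that by auto
    finally show ?thesis using p by simp
  qed
  moreover have "(\<Sum>l<n. S i l * schur n P l k) = (if i = k then 1 else 0)" if "i < n" "k < n" for i k
  proof -
    have "(\<Sum>l<n. S i l * schur n P l k) = (\<Sum>l<n. S i l * P l k) - (\<Sum>l<n. S i l * P l n) * P n k / P n n"
      unfolding schur_def by (simp add: sum_subtractf sum_distrib_left sum_distrib_right sum_divide_distrib algebra_simps)
    also have "(\<Sum>l<n. S i l * P l n) = - S i n * P n n" using B[of i n] that by auto
    also have "(\<Sum>l<n. S i l * P l k) = (if i = k then 1 else 0) - S i n * P n k" using B[of i k] that by auto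
    finally show ?thesis using p by simp
  qed
  ultimately show ?thesis unfolding isinv_def by blast
qed

lemma isinv_symm:
  assumes inv: "isinv n P S" and sy: "symm n P"
  shows "symm n S"
  unfolding symm_def
proof (intro allI impI)
  fix i k assume ik: "i < n" "k < n"
  have "S i k = (\<Sum>l<n. S i l * (if l = k then 1 else 0))" using ik by (simp add: if_distrib cong: if_cong)
  also have "\<dots> = (\<Sum>l<n. S i l * (\<Sum>m<n. S k m * P m l))"
    using inv ik unfolding isinv_def by (intro sum.cong) auto
  also have "\<dots> = (\<Sum>m<n. S k m * (\<Sum>l<n. S i l * P l m))"
    unfolding sum_distrib_left using sy unfolding symm_def
    by (subst sum.swap) (intro sum.cong refl, auto simp: algebra_simps)
  also have "\<dots> = (\<Sum>m<n. S k m * (if i = m then 1 else 0))"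
    using inv ik unfolding isinv_def by (intro sum.cong) auto
  also have "\<dots> = S k i" using ik by (simp add: if_distrib cong: if_cong)
  finally show "S i k = S k i" .
qed

lemma isinv_unique:
  assumes "isinv n P S" "isinv n P S'" "i < n" "k < n"
  shows "S i k = S' i k"
proof -
  have "S i k = (\<Sum>l<n. S i l * (if l = k then 1 else 0))" using assms by (simp add: if_distrib cong: if_cong)
  also have "\<dots> = (\<Sum>l<n. S i l * (\<Sum>m<n. P l m * S' m k))"
    using assms unfolding isinv_def by (intro sum.cong) auto
  also have "\<dots> = (\<Sum>m<n. (\<Sum>l<n. S i l * P l m) * S' m k)"
    unfolding sum_distrib_left sum_distrib_right
    by (subst sum.swap) (intro sum.cong refl, auto simp: algebra_simps)
  also have "\<dots> = (\<Sum>m<n. (if i = m then S' m k else 0))"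
    using assms unfolding isinv_def by (intro sum.cong) auto
  also have "\<dots> = S' i k" using assms by simp
  finally show ?thesis .
qed


lemma qf_sub:
  "qf n S (\<lambda>i. c i - a * r i) = qf n S c - a * (\<Sum>i<n. \<Sum>k<n. c i * S i k * r k)
      - a * (\<Sum>i<n. \<Sum>k<n. r i * S i k * c k) + a^2 * qf n S r"
proof -
  have "qf n S (\<lambda>i. c i - a * r i) = (\<Sum>i<n. \<Sum>k<n. c i * S i k * c k - a * (c i * S i k * r k)
      - a * (r i * S i k * c k) + a^2 * (r i * S i k * r k))"
    unfolding qf_def by (intro sum.cong refl) (simp add: algebra_simps power2_eq_square)
  also have "\<dots> = qf n S c - a * (\<Sum>i<n. \<Sum>k<n. c i * S i k * r k)
      - a * (\<Sum>i<n. \<Sum>k<n. r i * S i k * c k) + a^2 * qf n S r"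
    unfolding qf_def by (simp add: sum.distrib sum_subtractf sum_distrib_left)
  finally show ?thesis .
qed

lemma qf_Suc_inv:
  assumes inv: "isinv (Suc n) P S" and sy: "symm (Suc n) P" and p: "P n n \<noteq> 0"
  shows "qf (Suc n) S c = qf n S (\<lambda>i. c i - c n * P n i / P n n) + (c n)^2 / P n n"
proof -
  define r where "r = P n"
  define p where "p = P n n"
  define T where "T = (\<Sum>i<n. \<Sum>k<n. c i * S i k * r k)"
  define U where "U = (\<Sum>i<n. \<Sum>k<n. r i * S i k * c k)"
  define V where "V = qf n S r"
  have pp: "p \<noteq> 0" using p by (simp add: p_def)
  have A: "(\<Sum>l<n. P i l * S l k) + P i n * S n k = (if i = k then 1 else 0)" if "i < Suc n" "k < Suc n" for i k
    using inv that unfolding isinv_def by auto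
  have B: "(\<Sum>l<n. S i l * P l k) + S i n * P n k = (if i = k then 1 else 0)" if "i < Suc n" "k < Suc n" for i k
    using inv that unfolding isinv_def by auto
  have Snk: "S n k = - (\<Sum>l<n. r l * S l k) / p" if "k < n" for k
    using A[of n k] that pp by (simp add: r_def p_def field_simps)
  have Sin: "S i n = - (\<Sum>l<n. S i l * r l) / p" if "i < n" for i
  proof -
    have "(\<Sum>l<n. S i l * P l n) = (\<Sum>l<n. S i l * r l)"
      using sy unfolding symm_def r_def by (intro sum.cong) auto
    thus ?thesis using B[of i n] that pp by (simp add: p_def field_simps)
  qed
  have l1: "lin n (S n) c = - U / p"
  proof -
    have "lin n (S n) c = (\<Sum>k<n. (- (\<Sum>l<n. r l * S l k) / p) * c k)"
      unfolding lin_def by (intro sum.cong) (auto simp: Snk)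
    also have "\<dots> = - (\<Sum>k<n. \<Sum>l<n. r l * S l k * c k) / p"
      by (simp add: sum_distrib_right sum_divide_distrib sum_negf)
    also have "(\<Sum>k<n. \<Sum>l<n. r l * S l k * c k) = U"
      unfolding U_def by (rule sum.swap)
    finally show ?thesis .
  qed
  have l2: "(\<Sum>i<n. c i * S i n) = - T / p"
  proof -
    have "(\<Sum>i<n. c i * S i n) = (\<Sum>i<n. c i * (- (\<Sum>l<n. S i l * r l) / p))"
      by (intro sum.cong) (auto simp: Sin)
    also have "\<dots> = - T / p"
      unfolding T_def by (simp add: sum_distrib_left sum_divide_distrib sum_negf mult.assoc)
    finally show ?thesis .
  qed
  have l3: "S n n = (1 + V / p) / p"
  proof -
    have "(\<Sum>l<n. r l * S l n) = (\<Sum>l<n. r l * (- (\<Sum>k<n. S l k * r k) / p))"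
      by (intro sum.cong) (auto simp: Sin)
    also have "\<dots> = - V / p"
      unfolding V_def qf_def by (simp add: sum_distrib_left sum_divide_distrib sum_negf mult.assoc)
    finally have "(\<Sum>l<n. r l * S l n) = - V / p" .
    moreover have "(\<Sum>l<n. r l * S l n) + p * S n n = 1" using A[of n n] by (simp add: r_def p_def)
    hence "S n n = (1 - (\<Sum>l<n. r l * S l n)) / p" using pp by (simp add: field_simps)
    ultimately show ?thesis by simp
  qed
  have "qf (Suc n) S c = qf n S c + c n * lin n (S n) c + (\<Sum>i<n. c i * S i n) * c n + c n * S n n * c n"
    by (rule qf_Suc)
  also have "\<dots> = qf n S c - c n * U / p - T * c n / p + (c n)^2 * (1 + V / p) / p"
    unfolding l1 l2 l3 by (simp add: power2_eq_square)
  also have "\<dots> = qf n S (\<lambda>i. c i - (c n / p) * r i) + (c n)^2 / p"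
    unfolding qf_sub T_def[symmetric] U_def[symmetric] V_def[symmetric] using pp
    by (simp add: field_simps power2_eq_square)
  finally show ?thesis by (simp add: r_def p_def)
qed

lemma lin_Suc_upd: "lin (Suc n) c (u(n:=t)) = lin n c u + c n * t"
proof -
  have "lin n c (u(n:=t)) = lin n c u" by (rule lin_cong) auto
  thus ?thesis unfolding lin_def by simp
qed


lemma det_schur:
  assumes p: "P n n \<noteq> 0"
  shows "Determinant.det (sq_matrix (Suc n) P) = P n n * Determinant.det (sq_matrix n (schur n P))"
proof -
  define L where "L = Matrix.mat (Suc n) (Suc n) (\<lambda>(i,k). if i = k then 1 else if k = n then P i n / P n n else (0::real))"
  define B where "B = Matrix.mat (Suc n) (Suc n) (\<lambda>(i,k). if i = n then P n k else if k = n then 0 else schur n P i k)"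
  have LB: "sq_matrix (Suc n) P = L * B"
  proof (rule eq_matI)
    fix i k assume i: "i < dim_row (L * B)" and k: "k < dim_col (L * B)"
    hence i': "i < Suc n" and k': "k < Suc n" by (auto simp: L_def B_def)
    have "(L * B) $$ (i, k) = (\<Sum>l<Suc n. L $$ (i,l) * B $$ (l,k))"
      using i' k' by (simp add: L_def B_def scalar_prod_def atLeast0LessThan)
    also have "\<dots> = (\<Sum>l<n. L $$ (i,l) * B $$ (l,k)) + L $$ (i,n) * B $$ (n,k)" by simp
    also have "(\<Sum>l<n. L $$ (i,l) * B $$ (l,k)) = (if i < n then B $$ (i,k) else 0)"
    proof -
      have "(\<Sum>l<n. L $$ (i,l) * B $$ (l,k)) = (\<Sum>l<n. if l = i then B $$ (i,k) else 0)"
        using i' by (intro sum.cong refl) (auto simp: L_def)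
      also have "\<dots> = (if i < n then B $$ (i,k) else 0)" by simp
      finally show ?thesis .
    qed
    finally have "(L * B) $$ (i, k) = (if i < n then B $$ (i,k) else 0) + L $$ (i,n) * B $$ (n,k)" .
    also have "\<dots> = P i k"
      using i' k' p by (auto simp: L_def B_def schur_def field_simps less_Suc_eq)
    finally show "sq_matrix (Suc n) P $$ (i, k) = (L * B) $$ (i, k)"
      using i' k' by (simp add: sq_matrix_def)
  qed (auto simp: sq_matrix_def L_def B_def)
  have Lc: "L \<in> carrier_mat (Suc n) (Suc n)" and Bc: "B \<in> carrier_mat (Suc n) (Suc n)"
    by (auto simp: L_def B_def)
  have dL: "Determinant.det L = 1"
  proof -
    have "upper_triangular L" by (auto simp: upper_triangular_def L_def)
    hence "Determinant.det L = prod_list (diag_mat L)" using det_upper_triangular Lc by blast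
    also have "\<dots> = 1" unfolding prod_list_diag_prod by (intro prod.neutral) (auto simp: L_def)
    finally show ?thesis .
  qed
  have dB: "Determinant.det B = P n n * Determinant.det (sq_matrix n (schur n P))"
  proof -
    have "Determinant.det B = (\<Sum>i<Suc n. B $$ (i,n) * cofactor B i n)"
      by (rule laplace_expansion_column[OF Bc]) simp
    also have "\<dots> = B $$ (n,n) * cofactor B n n"
      by (subst sum.mono_neutral_right[of "{..<Suc n}" "{n}"]) (auto simp: B_def)
    also have "cofactor B n n = Determinant.det (mat_delete B n n)"
      by (simp add: cofactor_def)
    also have "mat_delete B n n = sq_matrix n (schur n P)"
      by (rule eq_matI) (auto simp: mat_delete_def B_def sq_matrix_def)
    finally show ?thesis by (simp add: B_def)
  qed
  show ?thesis unfolding LB det_mult[OF Lc Bc] dL dB by simp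
qed

lemma pd_det_pos: "pos_def_mat n P \<Longrightarrow> Determinant.det (sq_matrix n P) > 0"
proof (induction n arbitrary: P)
  case 0
  thus ?case by (simp add: sq_matrix_def)
next
  case (Suc n)
  have "P n n > 0" using pd_diag[OF Suc.prems] .
  moreover have "Determinant.det (sq_matrix n (schur n P)) > 0" using Suc.IH[OF pd_schur[OF Suc.prems]] .
  ultimately show ?case by (simp add: det_schur)
qed


lemma isinv_swap: "isinv n P S \<Longrightarrow> isinv n S P"
  unfolding isinv_def by blast

lemma lin_inv:
  assumes inv: "isinv n S T" and sy: "symm n T" and l: "l < n"
  shows "(\<Sum>m<n. S l m * (\<Sum>i<n. x i * T i m)) = x l"
proof -
  have "(\<Sum>m<n. S l m * (\<Sum>i<n. x i * T i m)) = (\<Sum>i<n. x i * (\<Sum>m<n. S l m * T m i))"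
    unfolding sum_distrib_left using sy unfolding symm_def
    by (subst sum.swap) (intro sum.cong refl, auto simp: algebra_simps)
  also have "\<dots> = (\<Sum>i<n. if i = l then x l else 0)"
    using inv l unfolding isinv_def by (intro sum.cong) auto
  also have "\<dots> = x l" using l by simp
  finally show ?thesis .
qed

lemma pd_inv_pd:
  assumes pd: "pos_def_mat n S" and inv: "isinv n S T"
  shows "pos_def_mat n T"
proof -
  have syS: "symm n S" using pd_symm[OF pd] .
  have syT: "symm n T" using isinv_symm[OF inv syS] .
  have "qf n T x > 0" if ex: "\<exists>i<n. x i \<noteq> 0" for x
  proof -
    define y where "y l = (\<Sum>i<n. x i * T i l)" for l
    have Sy: "(\<Sum>m<n. S l m * y m) = x l" if "l < n" for l
      unfolding y_def by (rule lin_inv[OF inv syT that])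
    obtain i where i: "i < n" "x i \<noteq> 0" using ex by blast
    have "\<exists>l<n. y l \<noteq> 0"
    proof (rule ccontr)
      assume "\<not> (\<exists>l<n. y l \<noteq> 0)"
      hence "(\<Sum>m<n. S i m * y m) = 0" by (intro sum.neutral) auto
      thus False using Sy[OF i(1)] i(2) by simp
    qed
    then obtain l where l: "l < n" "y l \<noteq> 0" by blast
    have "qf n S y > 0" by (rule pd_pos[where x=y, OF pd l])
    also have "qf n S y = (\<Sum>l<n. y l * (\<Sum>m<n. S l m * y m))"
      unfolding qf_def by (simp add: sum_distrib_left mult.assoc)
    also have "\<dots> = (\<Sum>l<n. y l * x l)" by (intro sum.cong refl) (simp add: Sy)
    also have "\<dots> = qf n T x" unfolding qf_def y_def
      by (subst sum.swap) (simp add: sum_distrib_right)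
    finally show ?thesis .
  qed
  thus ?thesis using syT unfolding pd_iff by blast
qed

definition minv :: "nat \<Rightarrow> (nat \<Rightarrow> nat \<Rightarrow> real) \<Rightarrow> nat \<Rightarrow> nat \<Rightarrow> real" where
  "minv n S i k = the (mat_inverse (sq_matrix n S)) $$ (i, k)"

lemma sq_matrix_carrier[simp]: "sq_matrix n S \<in> carrier_mat n n"
  by (simp add: sq_matrix_def)

lemma pd_minv:
  assumes pd: "pos_def_mat n S"
  shows "isinv n S (minv n S)" "pos_def_mat n (minv n S)"
    "Determinant.det (sq_matrix n (minv n S)) * Determinant.det (sq_matrix n S) = 1"
proof -
  let ?A = "sq_matrix n S"
  have dA: "Determinant.det ?A \<noteq> 0" using pd_det_pos[OF pd] by simp
  have unit: "?A \<in> Units (ring_mat TYPE(real) n ())"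
    by (rule det_non_zero_imp_unit[OF sq_matrix_carrier dA])
  obtain B where B: "mat_inverse ?A = Some B"
  proof (cases "mat_inverse ?A")
    case None
    hence "?A \<notin> Units (ring_mat TYPE(real) n ())" by (rule mat_inverse(1)[OF sq_matrix_carrier])
    with unit show ?thesis by simp
  qed auto
  have AB: "?A * B = 1\<^sub>m n" "B * ?A = 1\<^sub>m n" "B \<in> carrier_mat n n"
    using mat_inverse(2)[OF sq_matrix_carrier B] by auto
  have mB: "minv n S i k = B $$ (i,k)" for i k unfolding minv_def B by simp
  have sqB: "sq_matrix n (minv n S) = B"
    by (rule eq_matI) (use AB(3) in \<open>auto simp: sq_matrix_def mB\<close>)
  have "(\<Sum>l<n. S i l * minv n S l k) = (if i = k then 1 else 0)" if "i < n" "k < n" for i k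
  proof -
    have "(?A * B) $$ (i,k) = (\<Sum>l<n. S i l * minv n S l k)"
      using that AB(3) by (simp add: scalar_prod_def atLeast0LessThan sq_matrix_def mB)
    thus ?thesis using AB(1) that by simp
  qed
  moreover have "(\<Sum>l<n. minv n S i l * S l k) = (if i = k then 1 else 0)" if "i < n" "k < n" for i k
  proof -
    have "(B * ?A) $$ (i,k) = (\<Sum>l<n. minv n S i l * S l k)"
      using that AB(3) by (simp add: scalar_prod_def atLeast0LessThan sq_matrix_def mB)
    thus ?thesis using AB(2) that by simp
  qed
  ultimately show inv: "isinv n S (minv n S)" unfolding isinv_def by blast
  show "pos_def_mat n (minv n S)" by (rule pd_inv_pd[OF pd inv])
  have "Determinant.det (B * ?A) = Determinant.det B * Determinant.det ?A"
    by (rule det_mult[OF AB(3) sq_matrix_carrier])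
  thus "Determinant.det (sq_matrix n (minv n S)) * Determinant.det (sq_matrix n S) = 1"
    using AB(2) sqB by simp
qed


abbreviation LL :: "nat \<Rightarrow> (nat \<Rightarrow> real) measure" where
  "LL n \<equiv> PiM {..<n} (\<lambda>_. lborel)"

interpretation lbp: product_sigma_finite "\<lambda>_::nat. lborel :: real measure"
  by (simp add: product_sigma_finite_def sigma_finite_lborel)

lemma comp_meas: "i < n \<Longrightarrow> (\<lambda>x. x i) \<in> borel_measurable (LL n)"
  using measurable_component_singleton[of i "{..<n}" "\<lambda>_. lborel :: real measure"] by simp

lemma qf_meas[measurable]: "(\<lambda>x. qf n P x) \<in> borel_measurable (LL n)"
  unfolding qf_def by (intro borel_measurable_sum borel_measurable_times borel_measurable_const comp_meas) auto

lemma lin_meas[measurable]: "(\<lambda>x. lin n c x) \<in> borel_measurable (LL n)"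
  unfolding lin_def by (intro borel_measurable_sum borel_measurable_times borel_measurable_const comp_meas) auto

definition hP :: "nat \<Rightarrow> (nat \<Rightarrow> nat \<Rightarrow> real) \<Rightarrow> (nat \<Rightarrow> real) \<Rightarrow> real" where
  "hP n P x = exp (- qf n P x / 2)"

definition zr :: "nat \<Rightarrow> (nat \<Rightarrow> nat \<Rightarrow> real) \<Rightarrow> real" where
  "zr n P = (2 * pi) powr (real n / 2) / sqrt (Determinant.det (sq_matrix n P))"

definition mu :: "nat \<Rightarrow> (nat \<Rightarrow> nat \<Rightarrow> real) \<Rightarrow> (nat \<Rightarrow> real) \<Rightarrow> real" where
  "mu n P u = - lin n (P n) u / P n n"

definition G :: "nat \<Rightarrow> (nat \<Rightarrow> nat \<Rightarrow> real) \<Rightarrow> (nat \<Rightarrow> real) measure" where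
  "G n P = density (LL n) (\<lambda>x. ennreal (hP n P x / zr n P))"

lemma hP_meas[measurable]: "(\<lambda>x. hP n P x) \<in> borel_measurable (LL n)"
  unfolding hP_def by measurable

lemma mu_meas[measurable]: "(\<lambda>x. mu n P x) \<in> borel_measurable (LL n)"
  unfolding mu_def by measurable

lemma hP_pos: "hP n P x > 0" by (simp add: hP_def)

lemma zr_pos: "pos_def_mat n P \<Longrightarrow> zr n P > 0"
  unfolding zr_def using pd_det_pos[of n P] by simp

lemma gauss1d:
  assumes p: "p > 0"
  shows "exp (- (p * (t - m)^2 / 2)) = sqrt (2*pi/p) * normal_density m (1/sqrt p) t"
proof -
  have "(1 / sqrt p)^2 = 1 / p" using p by (simp add: power_divide)
  hence "normal_density m (1/sqrt p) t = 1 / sqrt (2 * pi / p) * exp (- (p * (t - m)^2 / 2))"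
    unfolding normal_density_def using p by (simp add: field_simps)
  thus ?thesis using p by simp
qed

lemma nn_normal: "\<sigma> > 0 \<Longrightarrow> (\<integral>\<^sup>+t. ennreal (normal_density m \<sigma> t) \<partial>lborel) = 1"
  by (subst nn_integral_eq_integral) (auto simp: integral_normal_density)

lemma nn_gauss1d:
  assumes p: "p > 0"
  shows "(\<integral>\<^sup>+t. ennreal (exp (- (p * (t - m)^2 / 2))) \<partial>lborel) = ennreal (sqrt (2*pi/p))"
proof -
  have "(\<integral>\<^sup>+t. ennreal (exp (- (p * (t - m)^2 / 2))) \<partial>lborel)
      = (\<integral>\<^sup>+t. ennreal (sqrt (2*pi/p)) * ennreal (normal_density m (1/sqrt p) t) \<partial>lborel)"
    by (intro nn_integral_cong) (subst gauss1d[OF p], rule ennreal_mult, use p in auto)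
  also have "\<dots> = ennreal (sqrt (2*pi/p)) * (\<integral>\<^sup>+t. ennreal (normal_density m (1/sqrt p) t) \<partial>lborel)"
    by (rule nn_integral_cmult) measurable
  also have "\<dots> = ennreal (sqrt (2*pi/p))" using p by (simp add: nn_normal)
  finally show ?thesis .
qed

lemma hP_split:
  assumes pd: "pos_def_mat (Suc n) P"
  shows "hP (Suc n) P (u(n:=t)) = hP n (schur n P) u * exp (- (P n n * (t - mu n P u)^2 / 2))"
proof -
  have p: "P n n > 0" using pd_diag[OF pd] .
  have "qf (Suc n) P (u(n:=t)) = qf n (schur n P) (u(n:=t)) + P n n * ((u(n:=t)) n + lin n (P n) (u(n:=t)) / P n n)^2"
    by (rule qf_complete[OF pd_symm[OF pd]]) (use p in auto)
  also have "qf n (schur n P) (u(n:=t)) = qf n (schur n P) u" by (rule qf_cong) auto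
  also have "lin n (P n) (u(n:=t)) = lin n (P n) u" by (rule lin_cong) auto
  also have "(u(n:=t)) n + lin n (P n) u / P n n = t - mu n P u" by (simp add: mu_def)
  finally have "qf (Suc n) P (u(n:=t)) = qf n (schur n P) u + P n n * (t - mu n P u)^2" .
  thus ?thesis unfolding hP_def by (simp add: exp_add[symmetric] field_simps)
qed

lemma zr_Suc:
  assumes pd: "pos_def_mat (Suc n) P"
  shows "zr (Suc n) P = zr n (schur n P) * sqrt (2*pi / P n n)"
proof -
  have p: "P n n > 0" using pd_diag[OF pd] .
  have d: "Determinant.det (sq_matrix n (schur n P)) > 0" using pd_det_pos[OF pd_schur[OF pd]] .
  have "(2*pi) powr (real (Suc n) / 2) = (2*pi) powr (real n / 2) * sqrt (2*pi)"
    by (simp add: add_divide_distrib powr_add powr_half_sqrt)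
  moreover have dd: "Determinant.det (sq_matrix (Suc n) P) = P n n * Determinant.det (sq_matrix n (schur n P))"
    by (rule det_schur) (use p in simp)
  ultimately show ?thesis unfolding zr_def dd
    using p d by (simp add: real_sqrt_mult real_sqrt_divide field_simps)
qed

lemma nn_hP:
  assumes "pos_def_mat n P"
  shows "(\<integral>\<^sup>+x. ennreal (hP n P x) \<partial>LL n) = ennreal (zr n P)"
  using assms
proof (induction n arbitrary: P)
  case 0
  have "(\<integral>\<^sup>+x. ennreal (hP 0 P x) \<partial>LL 0) = ennreal (hP 0 P (\<lambda>_. undefined))"
    by (simp add: lbp.nn_integral_empty)
  thus ?case by (simp add: hP_def qf_def zr_def sq_matrix_def)
next
  case (Suc n)
  have p: "P n n > 0" using pd_diag[OF Suc.prems] .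
  have "(\<integral>\<^sup>+x. ennreal (hP (Suc n) P x) \<partial>LL (Suc n))
      = (\<integral>\<^sup>+u. (\<integral>\<^sup>+t. ennreal (hP (Suc n) P (u(n:=t))) \<partial>lborel) \<partial>LL n)"
    unfolding lessThan_Suc by (rule lbp.product_nn_integral_insert) (auto simp flip: lessThan_Suc)
  also have "\<dots> = (\<integral>\<^sup>+u. ennreal (hP n (schur n P) u) * ennreal (sqrt (2*pi / P n n)) \<partial>LL n)"
  proof (rule nn_integral_cong)
    fix u
    have "(\<integral>\<^sup>+t. ennreal (hP (Suc n) P (u(n:=t))) \<partial>lborel)
        = (\<integral>\<^sup>+t. ennreal (hP n (schur n P) u) * ennreal (exp (- (P n n * (t - mu n P u)^2 / 2))) \<partial>lborel)"
      by (intro nn_integral_cong) (simp add: hP_split[OF Suc.prems] ennreal_mult hP_pos less_imp_le)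
    also have "\<dots> = ennreal (hP n (schur n P) u) * ennreal (sqrt (2*pi / P n n))"
      by (subst nn_integral_cmult) (auto simp: nn_gauss1d p)
    finally show "(\<integral>\<^sup>+t. ennreal (hP (Suc n) P (u(n:=t))) \<partial>lborel) = ennreal (hP n (schur n P) u) * ennreal (sqrt (2*pi / P n n))" .
  qed
  also have "\<dots> = ennreal (zr n (schur n P)) * ennreal (sqrt (2*pi / P n n))"
    by (subst nn_integral_multc) (auto simp: Suc.IH[OF pd_schur[OF Suc.prems]])
  also have "\<dots> = ennreal (zr (Suc n) P)"
    using zr_Suc[OF Suc.prems] zr_pos[OF pd_schur[OF Suc.prems]] p
    by (subst ennreal_mult[symmetric]) auto
  finally show ?case .
qed


lemma dens_meas[measurable]: "(\<lambda>x. ennreal (hP n P x / zr n P)) \<in> borel_measurable (LL n)"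
  by measurable

lemma space_G[simp]: "space (G n P) = space (LL n)"
  by (simp add: G_def)

lemma sets_G[simp, measurable_cong]: "sets (G n P) = sets (LL n)"
  by (simp add: G_def)

lemma nn_G: "f \<in> borel_measurable (LL n) \<Longrightarrow>
    (\<integral>\<^sup>+x. f x \<partial>G n P) = (\<integral>\<^sup>+x. ennreal (hP n P x / zr n P) * f x \<partial>LL n)"
  unfolding G_def by (rule nn_integral_density[OF dens_meas])

lemma prob_G:
  assumes pd: "pos_def_mat n P"
  shows "prob_space (G n P)"
proof
  have z: "zr n P > 0" using zr_pos[OF pd] .
  have "emeasure (G n P) (space (G n P)) = (\<integral>\<^sup>+x. ennreal (hP n P x / zr n P) * indicator (space (LL n)) x \<partial>LL n)"
    unfolding G_def by (subst emeasure_density) auto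
  also have "\<dots> = (\<integral>\<^sup>+x. ennreal (hP n P x) * ennreal (1 / zr n P) \<partial>LL n)"
    using z hP_pos[of n P] by (intro nn_integral_cong) (simp add: ennreal_mult[symmetric] less_imp_le)
  also have "\<dots> = ennreal (zr n P) * ennreal (1 / zr n P)"
    by (subst nn_integral_multc) (auto simp: nn_hP[OF pd])
  also have "\<dots> = 1" using z by (simp add: ennreal_mult[symmetric])
  finally show "emeasure (G n P) (space (G n P)) = 1" .
qed

lemma nd_meas[measurable]: "(\<lambda>(m, t). normal_density m s t) \<in> borel_measurable (borel \<Otimes>\<^sub>M borel)"
  unfolding normal_density_def by measurable

lemma upd_meas[measurable]:
  "(\<lambda>(u, t). u(n := t)) \<in> measurable (LL n \<Otimes>\<^sub>M lborel) (LL (Suc n))"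
  using measurable_add_dim[of n "{..<n}" "\<lambda>_. lborel :: real measure"] by (simp add: lessThan_Suc)

lemma rep:
  assumes pd: "pos_def_mat (Suc n) P" and f[measurable]: "f \<in> borel_measurable (LL (Suc n))"
  shows "(\<integral>\<^sup>+x. f x \<partial>G (Suc n) P) =
    (\<integral>\<^sup>+u. (\<integral>\<^sup>+t. f (u(n:=t)) * ennreal (normal_density (mu n P u) (1 / sqrt (P n n)) t) \<partial>lborel) \<partial>G n (schur n P))"
proof -
  have p: "P n n > 0" using pd_diag[OF pd] .
  define \<sigma> where "\<sigma> = 1 / sqrt (P n n)"
  have z: "zr n (schur n P) > 0" using zr_pos[OF pd_schur[OF pd]] .
  have key: "hP (Suc n) P (u(n:=t)) / zr (Suc n) P = hP n (schur n P) u / zr n (schur n P) * normal_density (mu n P u) \<sigma> t" for u t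
    unfolding hP_split[OF pd] zr_Suc[OF pd] \<sigma>_def gauss1d[OF p] using p z by (simp add: field_simps)
  have inner_meas: "(\<lambda>u. \<integral>\<^sup>+t. f (u(n:=t)) * ennreal (normal_density (mu n P u) \<sigma> t) \<partial>lborel) \<in> borel_measurable (LL n)"
  proof -
    have "(\<lambda>(u, t). f (u(n:=t)) * ennreal (normal_density (mu n P u) \<sigma> t)) \<in> borel_measurable (LL n \<Otimes>\<^sub>M lborel)"
    proof -
      have 1: "(\<lambda>(u, t). f (u(n:=t))) \<in> borel_measurable (LL n \<Otimes>\<^sub>M lborel)"
        using measurable_comp[OF upd_meas f] by (simp add: comp_def case_prod_beta')
      have 2: "(\<lambda>(u, t::real). (mu n P u, t)) \<in> measurable (LL n \<Otimes>\<^sub>M lborel) (borel \<Otimes>\<^sub>M borel)"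
        by measurable
      have 3: "(\<lambda>(u, t). normal_density (mu n P u) \<sigma> t) \<in> borel_measurable (LL n \<Otimes>\<^sub>M lborel)"
        using measurable_comp[OF 2 nd_meas[of \<sigma>]] by (simp add: comp_def case_prod_beta')
      show ?thesis using 1 3 by (simp add: case_prod_beta')
    qed
    thus ?thesis by (rule lborel.borel_measurable_nn_integral)
  qed
  have "(\<integral>\<^sup>+x. f x \<partial>G (Suc n) P) = (\<integral>\<^sup>+x. ennreal (hP (Suc n) P x / zr (Suc n) P) * f x \<partial>LL (Suc n))"
    by (rule nn_G) measurable
  also have "\<dots> = (\<integral>\<^sup>+u. (\<integral>\<^sup>+t. ennreal (hP (Suc n) P (u(n:=t)) / zr (Suc n) P) * f (u(n:=t)) \<partial>lborel) \<partial>LL n)"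
    unfolding lessThan_Suc by (rule lbp.product_nn_integral_insert) (auto simp flip: lessThan_Suc)
  also have "\<dots> = (\<integral>\<^sup>+u. ennreal (hP n (schur n P) u / zr n (schur n P)) *
       (\<integral>\<^sup>+t. f (u(n:=t)) * ennreal (normal_density (mu n P u) \<sigma> t) \<partial>lborel) \<partial>LL n)"
  proof (rule nn_integral_cong)
    fix u assume u: "u \<in> space (LL n)"
    have "(\<integral>\<^sup>+t. ennreal (hP (Suc n) P (u(n:=t)) / zr (Suc n) P) * f (u(n:=t)) \<partial>lborel)
      = (\<integral>\<^sup>+t. ennreal (hP n (schur n P) u / zr n (schur n P)) * (f (u(n:=t)) * ennreal (normal_density (mu n P u) \<sigma> t)) \<partial>lborel)"
    proof (intro nn_integral_cong)
      fix t
      have e: "ennreal (hP n (schur n P) u / zr n (schur n P) * normal_density (mu n P u) \<sigma> t) =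
          ennreal (hP n (schur n P) u / zr n (schur n P)) * ennreal (normal_density (mu n P u) \<sigma> t)"
        by (rule ennreal_mult) (use z hP_pos[of n "schur n P" u] in auto)
      show "ennreal (hP (Suc n) P (u(n:=t)) / zr (Suc n) P) * f (u(n:=t)) =
          ennreal (hP n (schur n P) u / zr n (schur n P)) * (f (u(n:=t)) * ennreal (normal_density (mu n P u) \<sigma> t))"
        unfolding key e by (simp add: mult_ac)
    qed
    also have "\<dots> = ennreal (hP n (schur n P) u / zr n (schur n P)) * (\<integral>\<^sup>+t. f (u(n:=t)) * ennreal (normal_density (mu n P u) \<sigma> t) \<partial>lborel)"
    proof (rule nn_integral_cmult)
      have "(\<lambda>t. u(n:=t)) \<in> measurable lborel (LL (Suc n))"
        using measurable_component_update[OF u, of n] by (simp add: lessThan_Suc)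
      thus "(\<lambda>t. f (u(n:=t)) * ennreal (normal_density (mu n P u) \<sigma> t)) \<in> borel_measurable lborel"
        by measurable
    qed
    finally show "(\<integral>\<^sup>+t. ennreal (hP (Suc n) P (u(n:=t)) / zr (Suc n) P) * f (u(n:=t)) \<partial>lborel) =
       ennreal (hP n (schur n P) u / zr n (schur n P)) * (\<integral>\<^sup>+t. f (u(n:=t)) * ennreal (normal_density (mu n P u) \<sigma> t) \<partial>lborel)" .
  qed
  also have "\<dots> = (\<integral>\<^sup>+u. (\<integral>\<^sup>+t. f (u(n:=t)) * ennreal (normal_density (mu n P u) \<sigma> t) \<partial>lborel) \<partial>G n (schur n P))"
    by (rule nn_G[symmetric]) (rule inner_meas)
  finally show ?thesis unfolding \<sigma>_def .
qed

lemma marg: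
  assumes pd: "pos_def_mat (Suc n) P" and f[measurable]: "f \<in> borel_measurable (LL n)"
  shows "(\<integral>\<^sup>+x. f (restrict x {..<n}) \<partial>G (Suc n) P) = (\<integral>\<^sup>+u. f u \<partial>G n (schur n P))"
proof -
  have p: "P n n > 0" using pd_diag[OF pd] .
  have rm: "(\<lambda>x. restrict x {..<n}) \<in> measurable (LL (Suc n)) (LL n)"
    by (rule measurable_restrict_subset) auto
  have "(\<integral>\<^sup>+x. f (restrict x {..<n}) \<partial>G (Suc n) P) =
    (\<integral>\<^sup>+u. (\<integral>\<^sup>+t. f (restrict (u(n:=t)) {..<n}) * ennreal (normal_density (mu n P u) (1 / sqrt (P n n)) t) \<partial>lborel) \<partial>G n (schur n P))"
    by (rule rep[OF pd]) (use measurable_comp[OF rm f] in \<open>simp add: comp_def\<close>)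
  also have "\<dots> = (\<integral>\<^sup>+u. f u \<partial>G n (schur n P))"
  proof (rule nn_integral_cong)
    fix u assume u: "u \<in> space (G n (schur n P))"
    hence r: "restrict (u(n:=t)) {..<n} = u" for t
      by (auto simp: space_PiM PiE_def extensional_def restrict_def)
    have "(\<integral>\<^sup>+t. f u * ennreal (normal_density (mu n P u) (1 / sqrt (P n n)) t) \<partial>lborel) = f u * 1"
      using p by (subst nn_integral_cmult) (auto simp: nn_normal)
    thus "(\<integral>\<^sup>+t. f (restrict (u(n:=t)) {..<n}) * ennreal (normal_density (mu n P u) (1 / sqrt (P n n)) t) \<partial>lborel) = f u"
      by (simp add: r)
  qed
  finally show ?thesis .
qed


lemma pd_qf_nonneg: assumes "pos_def_mat n P" shows "qf n P x \<ge> 0"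
proof (cases "\<exists>i<n. x i \<noteq> 0")
  case True thus ?thesis using pd_pos[OF assms] by (auto intro: less_imp_le)
next
  case False thus ?thesis unfolding qf_def by (auto intro!: sum_nonneg)
qed

lemma mom1:
  assumes s: "\<sigma> > 0"
  shows "(\<integral>\<^sup>+t. ennreal ((a + b*t)^2) * ennreal (normal_density m \<sigma> t) \<partial>lborel) = ennreal ((a + b*m)^2 + b^2*\<sigma>^2)"
proof -
  define A where "A = a + b * m"
  have eq: "(\<lambda>t. (a + b*t)^2 * normal_density m \<sigma> t) = (\<lambda>t. A^2 * normal_density m \<sigma> t
      + (2*A*b) * (normal_density m \<sigma> t * (t - m)^(2*0+1)) + b^2 * (normal_density m \<sigma> t * (t - m)^(2*1)))"
    by (rule ext) (simp add: A_def power2_eq_square algebra_simps)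
  have i1: "integrable lborel (\<lambda>t. A^2 * normal_density m \<sigma> t)" using s by (intro integrable_mult_right integrable_normal_density) auto
  have i2: "integrable lborel (\<lambda>t. (2*A*b) * (normal_density m \<sigma> t * (t - m)^(2*0+1)))"
    using s by (intro integrable_mult_right integrable_normal_moment) auto
  have i3: "integrable lborel (\<lambda>t. b^2 * (normal_density m \<sigma> t * (t - m)^(2*1)))"
    using s by (intro integrable_mult_right integrable_normal_moment) auto
  have int: "integrable lborel (\<lambda>t. (a + b*t)^2 * normal_density m \<sigma> t)"
    unfolding eq by (rule Bochner_Integration.integrable_add[OF Bochner_Integration.integrable_add[OF i1 i2] i3])
  have "(\<integral>t. (a + b*t)^2 * normal_density m \<sigma> t \<partial>lborel) = A^2 + b^2 * \<sigma>^2"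
  proof -
    have "(\<integral>t. (a + b*t)^2 * normal_density m \<sigma> t \<partial>lborel) =
        A^2 * 1 + (2*A*b) * 0 + b^2 * (fact (2*1) / ((2 / \<sigma>^2)^1 * fact 1))"
      unfolding eq
      by (simp only: Bochner_Integration.integral_add[OF Bochner_Integration.integrable_add[OF i1 i2] i3] Bochner_Integration.integral_add[OF i1 i2] integral_mult_right_zero
          integral_normal_density[OF s] integral_normal_moment_odd[OF s] integral_normal_moment_even[OF s])
    also have "\<dots> = A^2 + b^2 * \<sigma>^2" using s by (simp add: field_simps power2_eq_square)
    finally show ?thesis .
  qed
  moreover have "(\<integral>\<^sup>+t. ennreal ((a + b*t)^2) * ennreal (normal_density m \<sigma> t) \<partial>lborel)
      = (\<integral>\<^sup>+t. ennreal ((a + b*t)^2 * normal_density m \<sigma> t) \<partial>lborel)"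
    by (intro nn_integral_cong) (simp add: ennreal_mult)
  ultimately show ?thesis
    using nn_integral_eq_integral[OF int] by (simp add: A_def)
qed

lemma mom:
  assumes "pos_def_mat n P" "isinv n P S"
  shows "(\<integral>\<^sup>+x. ennreal ((lin n c x)^2) \<partial>G n P) = ennreal (qf n S c)"
  using assms
proof (induction n arbitrary: P S c)
  case 0
  thus ?case by (simp add: lin_def qf_def)
next
  case (Suc n)
  have pd: "pos_def_mat (Suc n) P" by fact
  have p: "P n n > 0" using pd_diag[OF pd] .
  have p': "P n n \<noteq> 0" using p by simp
  define c' where "c' i = c i - c n * P n i / P n n" for i
  have lc: "lin n c u + c n * mu n P u = lin n c' u" for u
  proof -
    have "lin n c' u = (\<Sum>i<n. c i * u i - (c n / P n n) * (P n i * u i))"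
      unfolding c'_def lin_def by (intro sum.cong refl) (simp add: algebra_simps)
    also have "\<dots> = lin n c u - (c n / P n n) * lin n (P n) u"
      unfolding lin_def by (simp add: sum_subtractf sum_distrib_left)
    finally show ?thesis by (simp add: mu_def)
  qed
  interpret Gp: prob_space "G n (schur n P)" by (rule prob_G[OF pd_schur[OF pd]])
  have sp1: "emeasure (G n (schur n P)) (space (LL n)) = 1" using Gp.emeasure_space_1 by simp
  have "(\<integral>\<^sup>+x. ennreal ((lin (Suc n) c x)^2) \<partial>G (Suc n) P) =
    (\<integral>\<^sup>+u. (\<integral>\<^sup>+t. ennreal ((lin (Suc n) c (u(n:=t)))^2) * ennreal (normal_density (mu n P u) (1 / sqrt (P n n)) t) \<partial>lborel) \<partial>G n (schur n P))"
    by (rule rep[OF pd]) measurable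
  also have "\<dots> = (\<integral>\<^sup>+u. ennreal ((lin n c' u)^2) + ennreal ((c n)^2 / P n n) \<partial>G n (schur n P))"
  proof (rule nn_integral_cong)
    fix u
    have "(\<integral>\<^sup>+t. ennreal ((lin (Suc n) c (u(n:=t)))^2) * ennreal (normal_density (mu n P u) (1 / sqrt (P n n)) t) \<partial>lborel)
       = ennreal ((lin n c u + c n * mu n P u)^2 + (c n)^2 * (1 / sqrt (P n n))^2)"
      unfolding lin_Suc_upd by (rule mom1) (use p in simp)
    also have "\<dots> = ennreal ((lin n c' u)^2) + ennreal ((c n)^2 / P n n)"
      unfolding lc using p by (subst ennreal_plus[symmetric]) (auto simp: power_divide)
    finally show "(\<integral>\<^sup>+t. ennreal ((lin (Suc n) c (u(n:=t)))^2) * ennreal (normal_density (mu n P u) (1 / sqrt (P n n)) t) \<partial>lborel)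
       = ennreal ((lin n c' u)^2) + ennreal ((c n)^2 / P n n)" .
  qed
  also have "\<dots> = ennreal (qf n S c') + ennreal ((c n)^2 / P n n)"
    by (subst nn_integral_add)
       (auto simp: Suc.IH[OF pd_schur[OF pd] isinv_schur[OF Suc.prems(2) p']] sp1)
  also have "\<dots> = ennreal (qf (Suc n) S c)"
  proof -
    have "pos_def_mat n S" by (rule pd_inv_pd[OF pd_schur[OF pd] isinv_schur[OF Suc.prems(2) p']])
    hence "qf n S c' \<ge> 0" by (rule pd_qf_nonneg)
    moreover have "qf (Suc n) S c = qf n S c' + (c n)^2 / P n n"
      unfolding c'_def by (rule qf_Suc_inv[OF Suc.prems(2) pd_symm[OF pd]]) (use p in simp)
    ultimately show ?thesis using p by (simp add: ennreal_plus)
  qed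
  finally show ?case .
qed


lemma aff_meas: "(\<lambda>x. \<lambda>i\<in>{..<n}. a i + s i * x i) \<in> measurable (LL n) (LL n)"
proof (rule measurable_restrict)
  fix i assume "i \<in> {..<n}"
  thus "(\<lambda>x. a i + s i * x i) \<in> measurable (LL n) lborel"
    unfolding measurable_lborel1
    by (intro borel_measurable_add borel_measurable_times borel_measurable_const comp_meas) auto
qed

lemma upd_meas2: "(\<lambda>v. v(n:=t)) \<in> measurable (LL n) (LL (Suc n))"
proof -
  have "(\<lambda>v. (v, t)) \<in> measurable (LL n) (LL n \<Otimes>\<^sub>M lborel)" by measurable
  from measurable_comp[OF this upd_meas[of n]] show ?thesis by (simp add: comp_def)
qed

lemma ins_fub:
  assumes g: "g \<in> borel_measurable (LL (Suc n))"
  shows "(\<integral>\<^sup>+x. g x \<partial>LL (Suc n)) = (\<integral>\<^sup>+u. (\<integral>\<^sup>+t. g (u(n:=t)) \<partial>lborel) \<partial>LL n)"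
  unfolding lessThan_Suc by (rule lbp.product_nn_integral_insert) (use g in \<open>auto simp flip: lessThan_Suc\<close>)

lemma ins_fub_rev:
  assumes g: "g \<in> borel_measurable (LL (Suc n))"
  shows "(\<integral>\<^sup>+x. g x \<partial>LL (Suc n)) = (\<integral>\<^sup>+t. (\<integral>\<^sup>+u. g (u(n:=t)) \<partial>LL n) \<partial>lborel)"
  unfolding lessThan_Suc by (rule lbp.product_nn_integral_insert_rev) (use g in \<open>auto simp flip: lessThan_Suc\<close>)

lemma inner_meas:
  assumes g: "g \<in> borel_measurable (LL (Suc n))"
  shows "(\<lambda>u. \<integral>\<^sup>+t. g (u(n:=t)) \<partial>lborel) \<in> borel_measurable (LL n)"
proof -
  have "(\<lambda>(u, t). g (u(n:=t))) \<in> borel_measurable (LL n \<Otimes>\<^sub>M lborel)"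
    using measurable_comp[OF upd_meas g] by (simp add: comp_def case_prod_beta')
  thus ?thesis by (rule lborel.borel_measurable_nn_integral)
qed

lemma mp1:
  assumes s: "\<And>i. s i = 1 \<or> s i = -1" and f: "f \<in> borel_measurable (LL n)"
  shows "(\<integral>\<^sup>+x. f (\<lambda>i\<in>{..<n}. a i + s i * x i) \<partial>LL n) = (\<integral>\<^sup>+x. f x \<partial>LL n)"
  using f
proof (induction n arbitrary: f)
  case 0
  thus ?case by (simp add: PiM_empty nn_integral_count_space_finite)
next
  case (Suc n)
  note f = Suc.prems
  define T where "T m x = (\<lambda>i\<in>{..<m}. a i + s i * x i)" for m and x :: "nat \<Rightarrow> real"
  have Tm: "T m \<in> measurable (LL m) (LL m)" for m unfolding T_def by (rule aff_meas)
  define g' where "g' v = (\<integral>\<^sup>+t. f (v(n:=t)) \<partial>lborel)" for v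
  have g'm: "g' \<in> borel_measurable (LL n)" unfolding g'_def by (rule inner_meas[OF f])
  have "(\<integral>\<^sup>+x. f (T (Suc n) x) \<partial>LL (Suc n)) = (\<integral>\<^sup>+u. (\<integral>\<^sup>+t. f (T (Suc n) (u(n:=t))) \<partial>lborel) \<partial>LL n)"
    by (rule ins_fub) (use measurable_comp[OF Tm f] in \<open>simp add: comp_def\<close>)
  also have "\<dots> = (\<integral>\<^sup>+u. g' (T n u) \<partial>LL n)"
  proof (rule nn_integral_cong)
    fix u assume u: "u \<in> space (LL n)"
    have e: "T (Suc n) (u(n:=t)) = (T n u)(n := a n + s n * t)" for t
      unfolding T_def by (rule ext) (auto simp: restrict_def)
    have Tu: "T n u \<in> space (LL n)" using measurable_space[OF Tm u] .
    have um: "(\<lambda>t. (T n u)(n:=t)) \<in> measurable lborel (LL (Suc n))"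
      using measurable_component_update[OF Tu, of n] by (simp add: lessThan_Suc)
    have gm: "(\<lambda>t. f ((T n u)(n:=t))) \<in> borel_measurable borel"
      using measurable_comp[OF um f] by (simp add: comp_def)
    have sn: "s n \<noteq> 0" "\<bar>s n\<bar> = 1" using s[of n] by auto
    show "(\<integral>\<^sup>+t. f (T (Suc n) (u(n:=t))) \<partial>lborel) = g' (T n u)"
      unfolding e g'_def using nn_integral_real_affine[OF gm sn(1), of "a n"] sn(2) by simp
  qed
  also have "\<dots> = (\<integral>\<^sup>+u. g' u \<partial>LL n)" unfolding T_def by (rule Suc.IH[OF g'm])
  also have "\<dots> = (\<integral>\<^sup>+x. f x \<partial>LL (Suc n))" unfolding g'_def by (rule ins_fub[OF f, symmetric])
  finally show ?case unfolding T_def .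
qed

lemma G_refl:
  assumes f: "f \<in> borel_measurable (LL n)"
  shows "(\<integral>\<^sup>+x. f (\<lambda>i\<in>{..<n}. - x i) \<partial>G n P) = (\<integral>\<^sup>+x. f x \<partial>G n P)"
proof -
  define ng where "ng x = (\<lambda>i\<in>{..<n}. 0 + (-1) * x i)" for x :: "nat \<Rightarrow> real"
  have ngm: "ng \<in> measurable (LL n) (LL n)" unfolding ng_def by (rule aff_meas)
  have ng: "(\<lambda>i\<in>{..<n}. - x i) = ng x" for x unfolding ng_def by simp
  have hq: "hP n P (ng x) = hP n P x" for x
  proof -
    have "qf n P (ng x) = qf n P (\<lambda>i. - x i)" by (rule qf_cong) (simp add: ng_def)
    also have "\<dots> = qf n P x" unfolding qf_def by simp
    finally show ?thesis by (simp add: hP_def)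
  qed
  have "(\<integral>\<^sup>+x. f (ng x) \<partial>G n P) = (\<integral>\<^sup>+x. ennreal (hP n P x / zr n P) * f (ng x) \<partial>LL n)"
    by (rule nn_G) (use measurable_comp[OF ngm f] in \<open>simp add: comp_def\<close>)
  also have "\<dots> = (\<integral>\<^sup>+x. (\<lambda>y. ennreal (hP n P y / zr n P) * f y) (ng x) \<partial>LL n)"
    by (simp add: hq)
  also have "\<dots> = (\<integral>\<^sup>+y. ennreal (hP n P y / zr n P) * f y \<partial>LL n)"
    unfolding ng_def by (rule mp1) (use f in auto)
  also have "\<dots> = (\<integral>\<^sup>+x. f x \<partial>G n P)" by (rule nn_G[OF f, symmetric])
  finally show ?thesis unfolding ng .
qed

lemma reidx:
  assumes bij: "bij_betw \<sigma> {..<m} {..<m}" and g: "g \<in> borel_measurable (LL m)"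
  shows "(\<integral>\<^sup>+w. g (\<lambda>a\<in>{..<m}. w (\<sigma> a)) \<partial>LL m) = (\<integral>\<^sup>+w. g w \<partial>LL m)"
proof -
  define R where "R w = (\<lambda>a\<in>{..<m}. w (\<sigma> a))" for w :: "nat \<Rightarrow> real"
  have sig: "\<sigma> a < m" if "a < m" for a using bij that by (auto simp: bij_betw_def)
  have Rm: "R \<in> measurable (LL m) (LL m)"
    unfolding R_def by (rule measurable_restrict) (auto intro!: comp_meas sig simp: measurable_lborel1)
  define \<tau> where "\<tau> = the_inv_into {..<m} \<sigma>"
  have tau1: "\<sigma> (\<tau> b) = b" if "b < m" for b
    unfolding \<tau>_def using bij that by (auto intro!: f_the_inv_into_f_bij_betw)
  have tau2: "\<tau> b < m" if "b < m" for b
    unfolding \<tau>_def using bij that by (auto intro!: the_inv_into_into simp: bij_betw_def)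
  have tau3: "\<tau> (\<sigma> a) = a" if "a < m" for a
    unfolding \<tau>_def using bij that by (auto intro!: the_inv_into_f_f simp: bij_betw_def)
  have D: "distr (LL m) (LL m) R = LL m"
  proof (rule lbp.PiM_eqI)
    fix A :: "nat \<Rightarrow> real set" assume A: "\<And>i. i \<in> {..<m} \<Longrightarrow> A i \<in> sets lborel"
    have pre: "R -` Pi\<^sub>E {..<m} A \<inter> space (LL m) = Pi\<^sub>E {..<m} (\<lambda>b. A (\<tau> b))"
    proof (rule Set.set_eqI)
     fix w show "w \<in> R -` Pi\<^sub>E {..<m} A \<inter> space (LL m) \<longleftrightarrow> w \<in> Pi\<^sub>E {..<m} (\<lambda>b. A (\<tau> b))"
     proof
      assume "w \<in> R -` Pi\<^sub>E {..<m} A \<inter> space (LL m)"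
      hence w: "w \<in> space (LL m)" "\<And>a. a < m \<Longrightarrow> w (\<sigma> a) \<in> A a" by (auto simp: R_def PiE_def Pi_def)
      show "w \<in> Pi\<^sub>E {..<m} (\<lambda>b. A (\<tau> b))"
        using w tau1 tau2 by (auto simp: space_PiM PiE_def Pi_def) (metis tau1 tau2)
    next
      assume w: "w \<in> Pi\<^sub>E {..<m} (\<lambda>b. A (\<tau> b))"
      hence "w \<in> space (LL m)" by (auto simp: space_PiM PiE_def Pi_def)
      moreover have "R w \<in> Pi\<^sub>E {..<m} A"
        using w sig tau3 unfolding R_def by (auto simp: PiE_def Pi_def) (metis sig tau3)
      ultimately show "w \<in> R -` Pi\<^sub>E {..<m} A \<inter> space (LL m)" by simp
     qed
    qed
    have "emeasure (distr (LL m) (LL m) R) (Pi\<^sub>E {..<m} A) = emeasure (LL m) (R -` Pi\<^sub>E {..<m} A \<inter> space (LL m))"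
      by (rule emeasure_distr[OF Rm]) (use A in \<open>auto intro!: sets_PiM_I_finite\<close>)
    also have "\<dots> = (\<Prod>b<m. emeasure lborel (A (\<tau> b)))"
      unfolding pre by (subst lbp.emeasure_PiM) (use A tau2 in auto)
    also have "\<dots> = (\<Prod>a<m. emeasure lborel (A a))"
      using prod.reindex_bij_betw[OF bij, of "\<lambda>b. emeasure lborel (A (\<tau> b))"] tau3 by simp
    finally show "emeasure (distr (LL m) (LL m) R) (Pi\<^sub>E {..<m} A) = (\<Prod>i<m. emeasure lborel (A i))" .
  qed simp_all
  have "(\<integral>\<^sup>+w. g (R w) \<partial>LL m) = (\<integral>\<^sup>+w. g w \<partial>distr (LL m) (LL m) R)"
    by (rule nn_integral_distr[symmetric, OF Rm]) (use g in simp)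
  thus ?thesis unfolding D R_def .
qed


lemma shear:
  assumes g: "g \<in> borel_measurable (LL (Suc n))"
  shows "(\<integral>\<^sup>+z. g (\<lambda>i\<in>{..<Suc n}. if i < n then z n - z i else z n) \<partial>LL (Suc n)) = (\<integral>\<^sup>+z. g z \<partial>LL (Suc n))"
proof -
  define Sh where "Sh z = (\<lambda>i\<in>{..<Suc n}. if i < n then z n - z i else z n)" for z :: "nat \<Rightarrow> real"
  have Shm: "Sh \<in> measurable (LL (Suc n)) (LL (Suc n))"
    unfolding Sh_def
  proof (rule measurable_restrict)
    fix i assume i: "i \<in> {..<Suc n}"
    show "(\<lambda>z. if i < n then z n - z i else z n) \<in> measurable (LL (Suc n)) lborel"
      unfolding measurable_lborel1 using i
      by (cases "i < n") (auto intro!: borel_measurable_diff comp_meas)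
  qed
  have "(\<integral>\<^sup>+z. g (Sh z) \<partial>LL (Suc n)) = (\<integral>\<^sup>+t. (\<integral>\<^sup>+u. g (Sh (u(n:=t))) \<partial>LL n) \<partial>lborel)"
    by (rule ins_fub_rev) (use measurable_comp[OF Shm g] in \<open>simp add: comp_def\<close>)
  also have "\<dots> = (\<integral>\<^sup>+t. (\<integral>\<^sup>+u. g (u(n:=t)) \<partial>LL n) \<partial>lborel)"
  proof (rule nn_integral_cong)
    fix t :: real
    have gt: "(\<lambda>v. g (v(n:=t))) \<in> borel_measurable (LL n)"
      using measurable_comp[OF upd_meas2 g] by (simp add: comp_def)
    have "(\<integral>\<^sup>+u. g (Sh (u(n:=t))) \<partial>LL n) = (\<integral>\<^sup>+u. (\<lambda>v. g (v(n:=t))) (\<lambda>i\<in>{..<n}. t + (-1) * u i) \<partial>LL n)"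
    proof (rule nn_integral_cong)
      fix u assume u: "u \<in> space (LL n)"
      have "Sh (u(n:=t)) = (\<lambda>i\<in>{..<n}. t + (-1) * u i)(n := t)"
        unfolding Sh_def by (rule ext) (auto simp: restrict_def)
      thus "g (Sh (u(n:=t))) = (\<lambda>v. g (v(n:=t))) (\<lambda>i\<in>{..<n}. t + (-1) * u i)" by simp
    qed
    also have "\<dots> = (\<integral>\<^sup>+u. g (u(n:=t)) \<partial>LL n)"
      by (rule mp1[OF _ gt]) simp
    finally show "(\<integral>\<^sup>+u. g (Sh (u(n:=t))) \<partial>LL n) = (\<integral>\<^sup>+u. g (u(n:=t)) \<partial>LL n)" .
  qed
  also have "\<dots> = (\<integral>\<^sup>+z. g z \<partial>LL (Suc n))" by (rule ins_fub_rev[OF g, symmetric])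
  finally show ?thesis unfolding Sh_def .
qed

definition sig :: "nat \<Rightarrow> nat \<Rightarrow> nat \<Rightarrow> nat" where
  "sig j n a = (if a = j then n else if a < j then a else a - 1)"

definition Tm :: "nat \<Rightarrow> nat \<Rightarrow> (nat \<Rightarrow> real) \<Rightarrow> nat \<Rightarrow> real" where
  "Tm j n z = (\<lambda>a\<in>{..<Suc n}. if a = j then z n else z n - z (sig j n a))"

lemma sig_lt: "j \<le> n \<Longrightarrow> a < Suc n \<Longrightarrow> a \<noteq> j \<Longrightarrow> sig j n a < n"
  unfolding sig_def by auto

lemma sig_skip: "i < n \<Longrightarrow> j \<le> n \<Longrightarrow> sig j n (skip j i) = i"
  unfolding sig_def skip_def by auto

lemma skip_neq: "skip j i \<noteq> j" unfolding skip_def by auto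

lemma skip_lt: "i < n \<Longrightarrow> skip j i < Suc n" unfolding skip_def by auto

lemma sig_bij: assumes "j \<le> n" shows "bij_betw (sig j n) {..<Suc n} {..<Suc n}"
proof (rule bij_betw_byWitness[where f' = "\<lambda>b. if b = n then j else skip j b"])
  show "\<forall>a\<in>{..<Suc n}. (if sig j n a = n then j else skip j (sig j n a)) = a"
    using assms by (auto simp: sig_def skip_def)
  show "\<forall>a'\<in>{..<Suc n}. sig j n (if a' = n then j else skip j a') = a'"
    using assms by (auto simp: sig_def skip_def)
  show "sig j n ` {..<Suc n} \<subseteq> {..<Suc n}" using assms by (auto simp: sig_def)
  show "(\<lambda>b. if b = n then j else skip j b) ` {..<Suc n} \<subseteq> {..<Suc n}" using assms by (auto simp: skip_def)
qed

lemma MPT: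
  assumes j: "j \<le> n" and f: "f \<in> borel_measurable (LL (Suc n))"
  shows "(\<integral>\<^sup>+z. f (Tm j n z) \<partial>LL (Suc n)) = (\<integral>\<^sup>+z. f z \<partial>LL (Suc n))"
proof -
  define R where "R w = (\<lambda>a\<in>{..<Suc n}. w (sig j n a))" for w :: "nat \<Rightarrow> real"
  have sl: "sig j n a < Suc n" if "a < Suc n" for a using sig_bij[OF j] that by (auto simp: bij_betw_def)
  have Rm: "R \<in> measurable (LL (Suc n)) (LL (Suc n))"
    unfolding R_def by (rule measurable_restrict) (auto intro!: comp_meas sl simp: measurable_lborel1)
  have e: "Tm j n z = R (\<lambda>i\<in>{..<Suc n}. if i < n then z n - z i else z n)" for z
    unfolding Tm_def R_def using sl sig_lt[OF j] j by (intro ext) (auto simp: sig_def)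
  have "(\<integral>\<^sup>+z. f (Tm j n z) \<partial>LL (Suc n)) = (\<integral>\<^sup>+z. (\<lambda>w. f (R w)) (\<lambda>i\<in>{..<Suc n}. if i < n then z n - z i else z n) \<partial>LL (Suc n))"
    unfolding e by simp
  also have "\<dots> = (\<integral>\<^sup>+w. f (R w) \<partial>LL (Suc n))"
    by (rule shear) (use measurable_comp[OF Rm f] in \<open>simp add: comp_def\<close>)
  also have "\<dots> = (\<integral>\<^sup>+w. f w \<partial>LL (Suc n))" unfolding R_def by (rule reidx[OF sig_bij[OF j] f])
  finally show ?thesis .
qed


definition Tc :: "nat \<Rightarrow> nat \<Rightarrow> nat \<Rightarrow> nat \<Rightarrow> real" where
  "Tc j n a b = (if b = n then 1 else 0) - (if a \<noteq> j \<and> b = sig j n a then 1 else 0)"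

definition tq :: "nat \<Rightarrow> (nat \<Rightarrow> nat \<Rightarrow> real) \<Rightarrow> (nat \<Rightarrow> nat \<Rightarrow> real) \<Rightarrow> nat \<Rightarrow> nat \<Rightarrow> real" where
  "tq m T P b c = (\<Sum>a<m. \<Sum>e<m. T a b * P a e * T e c)"

lemma Tm_lin:
  assumes j: "j \<le> n" and a: "a < Suc n"
  shows "Tm j n z a = (\<Sum>b<Suc n. Tc j n a b * z b)"
proof -
  have "(\<Sum>b<Suc n. Tc j n a b * z b) = (\<Sum>b<Suc n. (if b = n then z b else 0) - (if a \<noteq> j \<and> b = sig j n a then z b else 0))"
    by (rule sum.cong) (auto simp: Tc_def)
  also have "\<dots> = (\<Sum>b<Suc n. (if b = n then z b else 0)) - (\<Sum>b<Suc n. (if a \<noteq> j \<and> b = sig j n a then z b else 0))"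
    by (rule sum_subtractf)
  also have "(\<Sum>b<Suc n. (if b = n then z b else 0)) = z n" by simp
  also have "(\<Sum>b<Suc n. (if a \<noteq> j \<and> b = sig j n a then z b else 0)) = (if a \<noteq> j then z (sig j n a) else 0)"
  proof (cases "a = j")
    case False
    hence "sig j n a < Suc n" using sig_lt[OF j a] by simp
    thus ?thesis using False by simp
  qed simp
  finally show ?thesis unfolding Tm_def using a by simp
qed

lemma sum4_swap:
  "(\<Sum>a\<in>A. \<Sum>e\<in>A. \<Sum>b\<in>B. \<Sum>c\<in>B. f a e b c) = (\<Sum>b\<in>B. \<Sum>c\<in>B. \<Sum>a\<in>A. \<Sum>e\<in>A. f a e b c)"
proof -
  have "(\<Sum>a\<in>A. \<Sum>e\<in>A. \<Sum>b\<in>B. \<Sum>c\<in>B. f a e b c) = (\<Sum>a\<in>A. \<Sum>b\<in>B. \<Sum>e\<in>A. \<Sum>c\<in>B. f a e b c)"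
    by (rule sum.cong[OF refl], rule sum.swap)
  also have "\<dots> = (\<Sum>b\<in>B. \<Sum>a\<in>A. \<Sum>e\<in>A. \<Sum>c\<in>B. f a e b c)" by (rule sum.swap)
  also have "\<dots> = (\<Sum>b\<in>B. \<Sum>a\<in>A. \<Sum>c\<in>B. \<Sum>e\<in>A. f a e b c)"
    by (rule sum.cong[OF refl], rule sum.cong[OF refl], rule sum.swap)
  also have "\<dots> = (\<Sum>b\<in>B. \<Sum>c\<in>B. \<Sum>a\<in>A. \<Sum>e\<in>A. f a e b c)"
    by (rule sum.cong[OF refl], rule sum.swap)
  finally show ?thesis .
qed

lemma sp3: fixes f :: "'x \<Rightarrow> real" and g :: "'y \<Rightarrow> real" shows "sum f A * p * sum g B = (\<Sum>b\<in>A. \<Sum>c\<in>B. f b * p * g c)"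
proof -
  have "sum f A * p * sum g B = p * (sum f A * sum g B)" by (simp add: mult_ac)
  also have "\<dots> = p * (\<Sum>b\<in>A. \<Sum>c\<in>B. f b * g c)" by (simp add: sum_product)
  also have "\<dots> = (\<Sum>b\<in>A. \<Sum>c\<in>B. f b * p * g c)" by (simp add: sum_distrib_left mult_ac)
  finally show ?thesis .
qed

lemma qf_lin: "qf m P (\<lambda>a. \<Sum>b<m. T a b * z b) = qf m (tq m T P) z"
proof -
  have "qf m P (\<lambda>a. \<Sum>b<m. T a b * z b) = (\<Sum>a<m. \<Sum>e<m. \<Sum>b<m. \<Sum>c<m. (T a b * z b) * P a e * (T e c * z c))"
    unfolding qf_def by (intro sum.cong refl) (rule sp3)
  also have "\<dots> = (\<Sum>b<m. \<Sum>c<m. \<Sum>a<m. \<Sum>e<m. (T a b * z b) * P a e * (T e c * z c))"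
    by (rule sum4_swap)
  also have "\<dots> = qf m (tq m T P) z"
    unfolding qf_def tq_def by (intro sum.cong refl) (simp add: sum_distrib_left sum_distrib_right mult_ac)
  finally show ?thesis .
qed

lemma tq_symm: assumes "symm m P" shows "symm m (tq m T P)"
  unfolding symm_def tq_def
proof (intro allI impI)
  fix b c assume "b < m" "c < m"
  have "(\<Sum>a<m. \<Sum>e<m. T a b * P a e * T e c) = (\<Sum>e<m. \<Sum>a<m. T a b * P a e * T e c)" by (rule sum.swap)
  also have "\<dots> = (\<Sum>a<m. \<Sum>e<m. T a c * P a e * T e b)"
    using assms unfolding symm_def by (intro sum.cong refl) (auto simp: mult_ac)
  finally show "(\<Sum>a<m. \<Sum>e<m. T a b * P a e * T e c) = (\<Sum>a<m. \<Sum>e<m. T a c * P a e * T e b)" .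
qed

definition QQ :: "nat \<Rightarrow> nat \<Rightarrow> (nat \<Rightarrow> nat \<Rightarrow> real) \<Rightarrow> nat \<Rightarrow> nat \<Rightarrow> real" where
  "QQ j n P = tq (Suc n) (Tc j n) P"

lemma qf_QQ: assumes j: "j \<le> n" shows "qf (Suc n) (QQ j n P) z = qf (Suc n) P (Tm j n z)"
proof -
  have "qf (Suc n) P (Tm j n z) = qf (Suc n) P (\<lambda>a. \<Sum>b<Suc n. Tc j n a b * z b)"
    by (rule qf_cong) (simp add: Tm_lin[OF j])
  thus ?thesis unfolding QQ_def qf_lin by simp
qed

lemma pd_QQ:
  assumes pd: "pos_def_mat (Suc n) P" and j: "j \<le> n"
  shows "pos_def_mat (Suc n) (QQ j n P)"
proof -
  have "symm (Suc n) (QQ j n P)" unfolding QQ_def by (rule tq_symm[OF pd_symm[OF pd]])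
  moreover have "qf (Suc n) (QQ j n P) z > 0" if ex: "\<exists>i<Suc n. z i \<noteq> 0" for z
  proof -
    have "\<exists>a<Suc n. Tm j n z a \<noteq> 0"
    proof (cases "z n = 0")
      case False
      thus ?thesis using j by (intro exI[of _ j]) (auto simp: Tm_def)
    next
      case True
      obtain i where i: "i < Suc n" "z i \<noteq> 0" using ex by blast
      hence i': "i < n" using True by (cases "i = n") auto
      have "Tm j n z (skip j i) = - z i"
        unfolding Tm_def using skip_lt[OF i'] skip_neq[of j i] sig_skip[OF i' j] True by simp
      thus ?thesis using skip_lt[OF i'] i by (intro exI[of _ "skip j i"]) auto
    qed
    then obtain a where "a < Suc n" "Tm j n z a \<noteq> 0" by blast
    hence "qf (Suc n) P (Tm j n z) > 0" by (rule pd_pos[OF pd])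
    thus ?thesis by (simp add: qf_QQ[OF j])
  qed
  ultimately show ?thesis unfolding pd_iff by blast
qed

lemma Tm_meas: "j \<le> n \<Longrightarrow> Tm j n \<in> measurable (LL (Suc n)) (LL (Suc n))"
  unfolding Tm_def
proof (rule measurable_restrict)
  fix a assume j: "j \<le> n" and a: "a \<in> {..<Suc n}"
  show "(\<lambda>z. if a = j then z n else z n - z (sig j n a)) \<in> measurable (LL (Suc n)) lborel"
    unfolding measurable_lborel1 using a sig_lt[OF j, of a]
    by (cases "a = j") (auto intro!: borel_measurable_diff comp_meas)
qed

lemma G_transform:
  assumes pd: "pos_def_mat (Suc n) P" and j: "j \<le> n" and f: "f \<in> borel_measurable (LL (Suc n))"
  shows "(\<integral>\<^sup>+y. f y \<partial>G (Suc n) P) = (\<integral>\<^sup>+z. f (Tm j n z) \<partial>G (Suc n) (QQ j n P))"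
proof -
  let ?Q = "QQ j n P"
  have pdQ: "pos_def_mat (Suc n) ?Q" by (rule pd_QQ[OF pd j])
  have hh: "hP (Suc n) P (Tm j n z) = hP (Suc n) ?Q z" for z by (simp add: hP_def qf_QQ[OF j])
  have "ennreal (zr (Suc n) ?Q) = (\<integral>\<^sup>+z. ennreal (hP (Suc n) P (Tm j n z)) \<partial>LL (Suc n))"
    unfolding hh by (rule nn_hP[OF pdQ, symmetric])
  also have "\<dots> = ennreal (zr (Suc n) P)"
    by (subst MPT[OF j]) (auto simp: nn_hP[OF pd])
  finally have zz: "zr (Suc n) ?Q = zr (Suc n) P"
    using zr_pos[OF pd] zr_pos[OF pdQ] by simp
  have "(\<integral>\<^sup>+y. f y \<partial>G (Suc n) P) = (\<integral>\<^sup>+y. ennreal (hP (Suc n) P y / zr (Suc n) P) * f y \<partial>LL (Suc n))"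
    by (rule nn_G[OF f])
  also have "\<dots> = (\<integral>\<^sup>+z. ennreal (hP (Suc n) P (Tm j n z) / zr (Suc n) P) * f (Tm j n z) \<partial>LL (Suc n))"
    by (rule MPT[OF j, symmetric]) (use f in measurable)
  also have "\<dots> = (\<integral>\<^sup>+z. ennreal (hP (Suc n) ?Q z / zr (Suc n) ?Q) * f (Tm j n z) \<partial>LL (Suc n))"
    by (simp add: hh zz)
  also have "\<dots> = (\<integral>\<^sup>+z. f (Tm j n z) \<partial>G (Suc n) ?Q)"
    by (rule nn_G[symmetric]) (use measurable_comp[OF Tm_meas[OF j] f] in \<open>simp add: comp_def\<close>)
  finally show ?thesis .
qed

lemma Tm_delta:
  assumes j: "j \<le> n"
  shows "(\<lambda>i\<in>{..<n}. Tm j n z j - Tm j n z (skip j i)) = restrict z {..<n}"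
proof (rule ext)
  fix i show "(\<lambda>i\<in>{..<n}. Tm j n z j - Tm j n z (skip j i)) i = restrict z {..<n} i"
  proof (cases "i < n")
    case True
    thus ?thesis using j skip_lt[OF True] skip_neq[of j i] sig_skip[OF True j]
      by (simp add: Tm_def)
  qed simp
qed


lemma G_cong:
  assumes "\<And>i k. i < n \<Longrightarrow> k < n \<Longrightarrow> P i k = P' i k"
  shows "G n P = G n P'"
proof -
  have "qf n P x = qf n P' x" for x unfolding qf_def using assms by (intro sum.cong refl) auto
  hence h: "hP n P = hP n P'" by (auto simp: hP_def)
  have "sq_matrix n P = sq_matrix n P'" by (rule eq_matI) (auto simp: sq_matrix_def assms)
  hence "zr n P = zr n P'" by (simp add: zr_def)
  thus ?thesis unfolding G_def h by simp
qed

lemma gd_eq: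
  assumes pd: "pos_def_mat n S"
  shows "gauss_density n S x = hP n (minv n S) x / zr n (minv n S)"
proof -
  define D where "D = Determinant.det (sq_matrix n S)"
  have D: "D > 0" unfolding D_def by (rule pd_det_pos[OF pd])
  have dm: "Determinant.det (sq_matrix n (minv n S)) = 1 / D"
    using pd_minv(3)[OF pd] D unfolding D_def by (simp add: field_simps)
  have q: "(\<Sum>i<n. \<Sum>k<n. x i * the (mat_inverse (sq_matrix n S)) $$ (i, k) * x k) = qf n (minv n S) x"
    by (simp add: qf_def minv_def)
  have z: "zr n (minv n S) = (2*pi) powr (real n / 2) * sqrt D"
    unfolding zr_def dm using D by (simp add: real_sqrt_divide)
  have c1: "(2 * pi) powr (- real n / 2) = inverse ((2*pi) powr (real n / 2))"
  proof -
    have "- real n / 2 = - (real n / 2)" by simp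
    thus ?thesis by (simp only: powr_minus)
  qed
  have c2: "D powr (- 1 / 2) = inverse (sqrt D)"
  proof -
    have "(- 1 / 2 :: real) = - (1 / 2)" by simp
    hence "D powr (- 1 / 2) = inverse (D powr (1/2))" by (simp only: powr_minus)
    thus ?thesis using D by (simp add: powr_half_sqrt)
  qed
  have e: "exp (- (1 / 2) * qf n (minv n S) x) = exp (- qf n (minv n S) x / 2)" by simp
  have ar: "inverse a * inverse b * E = E / (a * b)" for a b E :: real
    by (simp add: divide_inverse mult_ac)
  show ?thesis
    unfolding gauss_density_def Let_def q D_def[symmetric] c1 c2 z hP_def e ar ..
qed

lemma gm_eq:
  assumes pd: "pos_def_mat n S"
  shows "gauss_measure n S = G n (minv n S)"
  unfolding gauss_measure_def G_def gd_eq[OF pd] ..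

lemma G_mean0:
  assumes int: "integrable (G n P) (\<lambda>x. lin n c x)"
  shows "(\<integral>x. lin n c x \<partial>G n P) = 0"
proof -
  have neg: "lin n c (\<lambda>i\<in>{..<n}. - x i) = - lin n c x" for x
  proof -
    have "lin n c (\<lambda>i\<in>{..<n}. - x i) = lin n c (\<lambda>i. - x i)" by (rule lin_cong) simp
    thus ?thesis by (simp add: lin_def sum_negf)
  qed
  have "(\<integral>\<^sup>+x. ennreal (lin n c x) \<partial>G n P) = (\<integral>\<^sup>+x. ennreal (lin n c (\<lambda>i\<in>{..<n}. - x i)) \<partial>G n P)"
    by (rule G_refl[symmetric]) measurable
  also have "\<dots> = (\<integral>\<^sup>+x. ennreal (- lin n c x) \<partial>G n P)" by (simp add: neg)
  finally show ?thesis by (simp add: real_lebesgue_integral_def[OF int])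
qed

lemma abs_le_sq: "\<bar>x::real\<bar> \<le> 1 + x^2"
proof -
  have "0 \<le> (\<bar>x\<bar> - 1)^2" by simp
  hence "2 * \<bar>x\<bar> \<le> 1 + \<bar>x\<bar>^2" by (simp add: power2_eq_square algebra_simps)
  moreover have "\<bar>x\<bar> \<ge> 0" by simp
  ultimately show ?thesis by (simp add: power2_abs)
qed

lemma sq_int:
  assumes N: "prob_space N" and f[measurable]: "f \<in> borel_measurable N"
    and fin: "(\<integral>\<^sup>+x. ennreal ((f x)^2) \<partial>N) < \<infinity>"
  shows "integrable N (\<lambda>x. (f x)^2)" "integrable N f"
proof -
  show i2: "integrable N (\<lambda>x. (f x)^2)" by (rule integrableI_nonneg) (use fin in auto)
  interpret prob_space N by fact
  have "integrable N (\<lambda>x. 1 + (f x)^2)" by (rule Bochner_Integration.integrable_add[OF _ i2]) simp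
  thus "integrable N f"
    by (rule Bochner_Integration.integrable_bound) (auto intro!: AE_I2 simp: abs_le_sq)
qed

lemma qf_pol:
  fixes a b :: "nat \<Rightarrow> real"
  shows "qf n S (\<lambda>k. a k + b k) - qf n S (\<lambda>k. a k - b k) =
    2 * (\<Sum>k<n. \<Sum>m<n. a k * S k m * b m) + 2 * (\<Sum>k<n. \<Sum>m<n. b k * S k m * a m)"
proof -
  have "qf n S (\<lambda>k. a k + b k) - qf n S (\<lambda>k. a k - b k) =
     (\<Sum>k<n. \<Sum>m<n. (a k + b k) * S k m * (a m + b m) - (a k - b k) * S k m * (a m - b m))"
    unfolding qf_def by (simp add: sum_subtractf)
  also have "\<dots> = (\<Sum>k<n. \<Sum>m<n. 2 * (a k * S k m * b m) + 2 * (b k * S k m * a m))"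
    by (intro sum.cong refl) (simp add: algebra_simps)
  also have "\<dots> = 2 * (\<Sum>k<n. \<Sum>m<n. a k * S k m * b m) + 2 * (\<Sum>k<n. \<Sum>m<n. b k * S k m * a m)"
    by (simp add: sum.distrib sum_distrib_left)
  finally show ?thesis .
qed

lemma sdelta:
  fixes i n :: nat
  assumes "i < n"
  shows "(\<Sum>k<n. if k = i then f k else (0::real)) = f i"
proof -
  have "(\<Sum>k<n. if k = i then f k else 0) = (\<Sum>k\<in>{i}. if k = i then f k else 0)"
    by (rule sum.mono_neutral_right) (use assms in auto)
  thus ?thesis by simp
qed

lemma sdelta1:
  fixes i n :: nat assumes "i < n"
  shows "(\<Sum>k<n. (if k = i then 1 else 0) * g k) = (g i :: real)"
proof -
  have "(\<Sum>k<n. (if k = i then 1 else 0) * g k) = (\<Sum>k<n. if k = i then g k else 0)" by (rule sum.cong) auto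
  thus ?thesis using sdelta[OF assms] by simp
qed

lemma sdelta2:
  fixes i n :: nat assumes "i < n"
  shows "(\<Sum>k<n. g k * (if k = i then 1 else 0)) = (g i :: real)"
proof -
  have "(\<Sum>k<n. g k * (if k = i then 1 else 0)) = (\<Sum>k<n. if k = i then g k else 0)" by (rule sum.cong) auto
  thus ?thesis using sdelta[OF assms] by simp
qed

lemma bil_ind:
  fixes i l n :: nat and S :: "nat \<Rightarrow> nat \<Rightarrow> real"
  assumes "i < n" "l < n"
  shows "(\<Sum>k<n. \<Sum>m<n. (if k = i then 1 else 0) * S k m * (if m = l then 1 else (0::real))) = S i l"
proof -
  have "(\<Sum>k<n. \<Sum>m<n. (if k = i then 1 else 0) * S k m * (if m = l then 1 else (0::real))) =
      (\<Sum>k<n. (if k = i then 1 else 0) * S k l)"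
    by (rule sum.cong[OF refl]) (rule sdelta2[OF assms(2)])
  also have "\<dots> = S i l" by (rule sdelta1[OF assms(1)])
  finally show ?thesis .
qed

lemma qf_pol_ind:
  assumes "symm n S" "i < n" "l < n"
  shows "qf n S (\<lambda>k. (if k = i then 1 else 0) + (if k = l then 1 else 0)) -
         qf n S (\<lambda>k. (if k = i then 1 else 0) - (if k = l then 1 else 0)) = 4 * S i l"
  unfolding qf_pol bil_ind[OF assms(2,3)] bil_ind[OF assms(3,2)]
  using assms unfolding symm_def by simp


lemma inv_col:
  assumes inv: "isinv d P Gm" and i: "i < d" and j: "j < d"
  shows "(\<Sum>k<d. P i k * Gm k j) = (if i = j then 1 else 0)"
  using inv i j unfolding isinv_def by blast

lemma shift:
  assumes pd: "pos_def_mat d P" and inv: "isinv d P Gm" and j: "j < d"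
    and f: "f \<in> borel_measurable (LL d)"
  shows "(\<integral>\<^sup>+y. f y * ennreal (exp (y j - Gm j j / 2)) \<partial>G d P) = (\<integral>\<^sup>+y. f (\<lambda>i\<in>{..<d}. y i + Gm i j) \<partial>G d P)"
proof -
  define m where "m i = Gm i j" for i
  have syP: "symm d P" using pd_symm[OF pd] .
  have T1: "(\<Sum>i<d. \<Sum>k<d. y i * P i k * m k) = y j" for y
  proof -
    have "(\<Sum>i<d. \<Sum>k<d. y i * P i k * m k) = (\<Sum>i<d. y i * (if i = j then 1 else 0))"
      by (intro sum.cong refl) (simp add: sum_distrib_left mult.assoc m_def inv_col[OF inv _ j, symmetric])
    also have "\<dots> = y j" by (rule sdelta2[OF j])
    finally show ?thesis .
  qed
  have U1: "(\<Sum>i<d. \<Sum>k<d. m i * P i k * y k) = y j" for y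
  proof -
    have "(\<Sum>i<d. \<Sum>k<d. m i * P i k * y k) = (\<Sum>k<d. \<Sum>i<d. m i * P i k * y k)" by (rule sum.swap)
    also have "\<dots> = (\<Sum>k<d. (if k = j then 1 else 0) * y k)"
    proof (rule sum.cong[OF refl])
      fix k assume k: "k \<in> {..<d}"
      have "(\<Sum>i<d. m i * P i k * y k) = (\<Sum>i<d. P k i * Gm i j) * y k"
        using syP k unfolding symm_def m_def by (simp add: sum_distrib_right sum_distrib_left mult_ac)
      thus "(\<Sum>i<d. m i * P i k * y k) = (if k = j then 1 else 0) * y k"
        using inv_col[OF inv _ j, of k] k by simp
    qed
    also have "\<dots> = y j" by (rule sdelta1[OF j])
    finally show ?thesis .
  qed
  have Q1: "qf d P m = Gm j j"
  proof -
    have "qf d P m = (\<Sum>i<d. m i * (if i = j then 1 else 0))"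
      unfolding qf_def
      by (intro sum.cong refl) (simp add: sum_distrib_left mult.assoc inv_col[OF inv _ j, symmetric] m_def)
    also have "\<dots> = Gm j j" using sdelta2[OF j] by (simp add: m_def)
    finally show ?thesis .
  qed
  have key: "hP d P y * exp (y j - Gm j j / 2) = hP d P (\<lambda>i. y i - m i)" for y
  proof -
    have "qf d P (\<lambda>i. y i - 1 * m i) = qf d P y - 2 * y j + Gm j j"
      unfolding qf_sub T1 U1 Q1 by simp
    thus ?thesis unfolding hP_def by (simp add: exp_add[symmetric] field_simps)
  qed
  define g where "g y = ennreal (hP d P (\<lambda>i. y i - m i) / zr d P) * f y" for y
  have gm: "g \<in> borel_measurable (LL d)"
  proof -
    have "(\<lambda>y. qf d P (\<lambda>i. y i - m i)) \<in> borel_measurable (LL d)"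
      unfolding qf_def by (intro borel_measurable_sum borel_measurable_times borel_measurable_diff borel_measurable_const comp_meas) auto
    thus ?thesis unfolding g_def hP_def using f by measurable
  qed
  have zp: "zr d P > 0" using zr_pos[OF pd] .
  note cm[measurable] = comp_meas[OF j]
  have "(\<integral>\<^sup>+y. f y * ennreal (exp (y j - Gm j j / 2)) \<partial>G d P) =
      (\<integral>\<^sup>+y. ennreal (hP d P y / zr d P) * (f y * ennreal (exp (y j - Gm j j / 2))) \<partial>LL d)"
    by (rule nn_G) (use f in measurable)
  also have "\<dots> = (\<integral>\<^sup>+y. g y \<partial>LL d)"
  proof (rule nn_integral_cong)
    fix y
    have "ennreal (hP d P y / zr d P) * ennreal (exp (y j - Gm j j / 2)) = ennreal (hP d P y / zr d P * exp (y j - Gm j j / 2))"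
      by (rule ennreal_mult[symmetric]) (use zp hP_pos[of d P y] in auto)
    also have "hP d P y / zr d P * exp (y j - Gm j j / 2) = hP d P (\<lambda>i. y i - m i) / zr d P"
      using key[of y] by simp
    finally show "ennreal (hP d P y / zr d P) * (f y * ennreal (exp (y j - Gm j j / 2))) = g y"
      unfolding g_def by (simp add: mult_ac)
  qed
  also have "\<dots> = (\<integral>\<^sup>+y. g (\<lambda>i\<in>{..<d}. m i + 1 * y i) \<partial>LL d)"
    by (rule mp1[symmetric, OF _ gm]) simp
  also have "\<dots> = (\<integral>\<^sup>+y. ennreal (hP d P y / zr d P) * f (\<lambda>i\<in>{..<d}. y i + Gm i j) \<partial>LL d)"
  proof (rule nn_integral_cong)
    fix y
    have e1: "(\<lambda>i\<in>{..<d}. m i + 1 * y i) = (\<lambda>i\<in>{..<d}. y i + Gm i j)"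
      by (simp add: m_def add.commute)
    have e2: "hP d P (\<lambda>i. (\<lambda>i\<in>{..<d}. y i + Gm i j) i - m i) = hP d P y"
      unfolding hP_def by (subst qf_cong[where n=d and y=y]) (auto simp: m_def)
    show "g (\<lambda>i\<in>{..<d}. m i + 1 * y i) = ennreal (hP d P y / zr d P) * f (\<lambda>i\<in>{..<d}. y i + Gm i j)"
      unfolding g_def e1 e2 ..
  qed
  also have "\<dots> = (\<integral>\<^sup>+y. f (\<lambda>i\<in>{..<d}. y i + Gm i j) \<partial>G d P)"
  proof (rule nn_G[symmetric])
    have "(\<lambda>y. \<lambda>i\<in>{..<d}. Gm i j + 1 * y i) \<in> measurable (LL d) (LL d)" by (rule aff_meas)
    moreover have "(\<lambda>y. \<lambda>i\<in>{..<d}. Gm i j + 1 * y i) = (\<lambda>y. \<lambda>i\<in>{..<d}. y i + Gm i j)"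
      by (simp add: add.commute)
    ultimately have "(\<lambda>y. \<lambda>i\<in>{..<d}. y i + Gm i j) \<in> measurable (LL d) (LL d)" by simp
    from measurable_comp[OF this f] show "(\<lambda>y. f (\<lambda>i\<in>{..<d}. y i + Gm i j)) \<in> borel_measurable (LL d)"
      by (simp add: comp_def)
  qed
  finally show ?thesis .
qed

lemma skip_sig: "k \<noteq> j \<Longrightarrow> k < Suc n \<Longrightarrow> j \<le> n \<Longrightarrow> skip j (sig j n k) = k"
  unfolding skip_def sig_def by auto

lemma skip_less_iff: "skip j i < j \<longleftrightarrow> i < j" unfolding skip_def by auto

lemma event:
  fixes y :: "nat \<Rightarrow> real" and Gm :: "nat \<Rightarrow> nat \<Rightarrow> real"
  assumes j: "j \<le> n" and sy: "symm (Suc n) Gm"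
  defines "x \<equiv> (\<lambda>i\<in>{..<Suc n}. y i + Gm i j)"
  defines "b \<equiv> (\<lambda>i. - (Gm j j + Gm (skip j i) (skip j i) - 2 * Gm (skip j i) j) / 2)"
  shows "(\<forall>k<Suc n. x j - Gm j j / 2 \<le> x k - Gm k k / 2 \<and> (k < j \<longrightarrow> x j - Gm j j / 2 < x k - Gm k k / 2)) \<longleftrightarrow>
    (\<lambda>i\<in>{..<n}. y j - y (skip j i)) \<in> Pi\<^sub>E {..<n} (\<lambda>i. if i < j then {..<b i} else {..b i})"
proof -
  have ek: "(x j - Gm j j / 2 \<le> x k - Gm k k / 2 \<longleftrightarrow> y j - y k \<le> - (Gm j j + Gm k k - 2 * Gm k j) / 2) \<and>
            (x j - Gm j j / 2 < x k - Gm k k / 2 \<longleftrightarrow> y j - y k < - (Gm j j + Gm k k - 2 * Gm k j) / 2)"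
    if "k < Suc n" for k
    using that j unfolding x_def by (auto simp: field_simps)
  show ?thesis
  proof
    assume H: "\<forall>k<Suc n. x j - Gm j j / 2 \<le> x k - Gm k k / 2 \<and> (k < j \<longrightarrow> x j - Gm j j / 2 < x k - Gm k k / 2)"
    show "(\<lambda>i\<in>{..<n}. y j - y (skip j i)) \<in> Pi\<^sub>E {..<n} (\<lambda>i. if i < j then {..<b i} else {..b i})"
    proof (rule PiE_I)
      fix i assume i: "i \<in> {..<n}"
      hence k: "skip j i < Suc n" using skip_lt by auto
      from H k ek[OF k] show "(\<lambda>i\<in>{..<n}. y j - y (skip j i)) i \<in> (if i < j then {..<b i} else {..b i})"
        using i by (auto simp: b_def skip_less_iff)
    qed simp
  next
    assume H: "(\<lambda>i\<in>{..<n}. y j - y (skip j i)) \<in> Pi\<^sub>E {..<n} (\<lambda>i. if i < j then {..<b i} else {..b i})"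
    show "\<forall>k<Suc n. x j - Gm j j / 2 \<le> x k - Gm k k / 2 \<and> (k < j \<longrightarrow> x j - Gm j j / 2 < x k - Gm k k / 2)"
    proof (intro allI impI)
      fix k assume k: "k < Suc n"
      show "x j - Gm j j / 2 \<le> x k - Gm k k / 2 \<and> (k < j \<longrightarrow> x j - Gm j j / 2 < x k - Gm k k / 2)"
      proof (cases "k = j")
        case True thus ?thesis by simp
      next
        case False
        define i where "i = sig j n k"
        have i: "i < n" unfolding i_def using sig_lt[OF j k False] .
        have ki: "skip j i = k" unfolding i_def by (rule skip_sig[OF False k j])
        have "y j - y k \<in> (if i < j then {..<b i} else {..b i})"
          using H i ki by (auto simp: PiE_def Pi_def)
        hence "y j - y k \<le> - (Gm j j + Gm k k - 2 * Gm k j) / 2 \<and> (k < j \<longrightarrow> y j - y k < - (Gm j j + Gm k k - 2 * Gm k j) / 2)"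
          using ki skip_less_iff[of j i] by (auto simp: b_def split: if_splits)
        thus ?thesis using ek[OF k] by blast
      qed
    qed
  qed
qed

lemma min_decomp:
  fixes e :: "nat \<Rightarrow> real" and d :: nat
  assumes d: "d > 0"
  shows "Min ((\<lambda>j. exp (e j)) ` {..<d}) =
    (\<Sum>j<d. if (\<forall>k<d. e j \<le> e k \<and> (k < j \<longrightarrow> e j < e k)) then exp (e j) else 0)"
proof -
  have "\<exists>j. j < d \<and> (\<forall>k<d. e j \<le> e k)"
  proof -
    have "Min (e ` {..<d}) \<in> e ` {..<d}" by (rule Min_in) (use d in auto)
    then obtain j where "j \<in> {..<d}" "e j = Min (e ` {..<d})" by auto
    thus ?thesis by (intro exI[of _ j]) auto
  qed
  define j0 where "j0 = (LEAST j. j < d \<and> (\<forall>k<d. e j \<le> e k))"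
  have j0: "j0 < d" "\<forall>k<d. e j0 \<le> e k"
    using LeastI_ex[OF \<open>\<exists>j. _\<close>] unfolding j0_def by auto
  have least: "\<not> (j < d \<and> (\<forall>k<d. e j \<le> e k))" if "j < j0" for j
    using not_less_Least[of j "\<lambda>j. j < d \<and> (\<forall>k<d. e j \<le> e k)"] that unfolding j0_def by blast
  have A: "(\<forall>k<d. e j \<le> e k \<and> (k < j \<longrightarrow> e j < e k)) \<longleftrightarrow> j = j0" if "j < d" for j
  proof
    assume H: "\<forall>k<d. e j \<le> e k \<and> (k < j \<longrightarrow> e j < e k)"
    show "j = j0"
    proof (rule ccontr)
      assume "j \<noteq> j0"
      hence "j < j0 \<or> j0 < j" by auto
      thus False
      proof
        assume "j < j0" thus False using least[of j] H that by auto
      next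
        assume jj: "j0 < j"
        have "e j < e j0" using H jj j0(1) by blast
        moreover have "e j0 \<le> e j" using j0(2) that by blast
        ultimately show False by simp
      qed
    qed
  next
    assume "j = j0"
    thus "\<forall>k<d. e j \<le> e k \<and> (k < j \<longrightarrow> e j < e k)"
      using j0 least by (auto simp: not_less) (meson less_trans not_le order_trans)
  qed
  have "(\<Sum>j<d. if (\<forall>k<d. e j \<le> e k \<and> (k < j \<longrightarrow> e j < e k)) then exp (e j) else 0) =
      (\<Sum>j<d. if j = j0 then exp (e j) else 0)"
    by (intro sum.cong refl) (simp add: A)
  also have "\<dots> = exp (e j0)" by (rule sdelta[OF j0(1)])
  also have "exp (e j0) = Min ((\<lambda>j. exp (e j)) ` {..<d})"
    by (rule Min_eqI[symmetric]) (use j0 in auto)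
  finally show ?thesis by simp
qed


lemma delta_meas: "j \<le> n \<Longrightarrow> (\<lambda>y. \<lambda>i\<in>{..<n}. y j - y (skip j i)) \<in> measurable (LL (Suc n)) (LL n)"
proof (rule measurable_restrict)
  fix i assume j: "j \<le> n" and i: "i \<in> {..<n}"
  show "(\<lambda>y. y j - y (skip j i)) \<in> measurable (LL (Suc n)) lborel"
    unfolding measurable_lborel1 using j i skip_lt[of i n j]
    by (intro borel_measurable_diff comp_meas) auto
qed

lemma null_hyper:
  assumes i: "i < n"
  shows "{z \<in> space (LL n). z i = c} \<in> null_sets (LL n)"
proof -
  have e: "{z \<in> space (LL n). z i = c} = Pi\<^sub>E {..<n} (\<lambda>k. if k = i then {c} else UNIV)"
    using i by (auto simp: space_PiM PiE_def Pi_def split: if_splits)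
  have s: "Pi\<^sub>E {..<n} (\<lambda>k. if k = i then {c} else UNIV) \<in> sets (LL n)"
    by (rule sets_PiM_I_finite) auto
  have "emeasure (LL n) (Pi\<^sub>E {..<n} (\<lambda>k. if k = i then {c} else UNIV)) =
      (\<Prod>k<n. emeasure lborel (if k = i then {c} else UNIV))"
    by (rule lbp.emeasure_PiM) auto
  also have "\<dots> = 0" using i by (intro prod_zero) auto
  finally show ?thesis unfolding e using s by (intro null_setsI) auto
qed

lemma prob_delta:
  assumes pd: "pos_def_mat (Suc n) P" and j: "j \<le> n"
  shows "(\<integral>\<^sup>+y. indicator (Pi\<^sub>E {..<n} (\<lambda>i. if i < j then {..<b i} else {..b i})) (\<lambda>i\<in>{..<n}. y j - y (skip j i)) \<partial>G (Suc n) P)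
    = emeasure (G n (schur n (QQ j n P))) (Pi\<^sub>E {..<n} (\<lambda>i. {..b i}))"
proof -
  define B where "B = Pi\<^sub>E {..<n} (\<lambda>i. if i < j then {..<b i} else {..b i})"
  define Bx where "Bx = Pi\<^sub>E {..<n} (\<lambda>i. {..b i})"
  let ?Q = "QQ j n P"
  have pdQ: "pos_def_mat (Suc n) ?Q" by (rule pd_QQ[OF pd j])
  have Bs: "B \<in> sets (LL n)" unfolding B_def by (rule sets_PiM_I_finite) auto
  have Bxs: "Bx \<in> sets (LL n)" unfolding Bx_def by (rule sets_PiM_I_finite) auto
  have im: "(\<lambda>u. indicator B u :: ennreal) \<in> borel_measurable (LL n)" using Bs by measurable
  have "(\<integral>\<^sup>+y. indicator B (\<lambda>i\<in>{..<n}. y j - y (skip j i)) \<partial>G (Suc n) P)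
      = (\<integral>\<^sup>+z. indicator B (\<lambda>i\<in>{..<n}. Tm j n z j - Tm j n z (skip j i)) \<partial>G (Suc n) ?Q)"
    by (rule G_transform[OF pd j]) (use measurable_comp[OF delta_meas[OF j] im] in \<open>simp add: comp_def\<close>)
  also have "\<dots> = (\<integral>\<^sup>+z. indicator B (restrict z {..<n}) \<partial>G (Suc n) ?Q)"
    by (simp add: Tm_delta[OF j])
  also have "\<dots> = (\<integral>\<^sup>+u. indicator B u \<partial>G n (schur n ?Q))"
    by (rule marg[OF pdQ im])
  also have "\<dots> = emeasure (G n (schur n ?Q)) B"
    by (rule nn_integral_indicator) (use Bs in simp)
  also have "\<dots> = emeasure (G n (schur n ?Q)) Bx"
  proof (rule emeasure_eq_AE)
    have "AE z in LL n. \<forall>i\<in>{..<n}. z i \<noteq> b i"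
    proof (rule AE_finite_allI)
      fix i assume "i \<in> {..<n}"
      thus "AE z in LL n. z i \<noteq> b i"
        by (intro AE_I'[OF null_hyper[of i n "b i"]]) auto
    qed simp
    hence "AE z in G n (schur n ?Q). \<forall>i\<in>{..<n}. z i \<noteq> b i"
      unfolding G_def by (subst AE_density) (auto elim!: eventually_mono)
    thus "AE z in G n (schur n ?Q). z \<in> B \<longleftrightarrow> z \<in> Bx"
      by (rule eventually_mono) (auto simp: B_def Bx_def PiE_def Pi_def less_le)
  qed (use Bs Bxs in auto)
  finally show ?thesis unfolding B_def Bx_def .
qed

lemma lin_ind:
  assumes "j < m" "k < m"
  shows "lin m (\<lambda>a. (if a = j then 1 else 0) - (if a = k then 1 else 0)) y = y j - y k"
proof -
  have "lin m (\<lambda>a. (if a = j then 1 else 0) - (if a = k then 1 else 0)) y =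
      (\<Sum>a<m. (if a = j then 1 else 0) * y a) - (\<Sum>a<m. (if a = k then 1 else 0) * y a)"
    unfolding lin_def by (simp add: left_diff_distrib sum_subtractf)
  thus ?thesis by (simp add: sdelta1[OF assms(1)] sdelta1[OF assms(2)])
qed

lemma qf_diff_ind:
  fixes S :: "nat \<Rightarrow> nat \<Rightarrow> real"
  assumes "j < m" "k < m"
  shows "qf m S (\<lambda>a. (if a = j then 1 else 0) - (if a = k then 1 else 0)) = S j j + S k k - S j k - S k j"
proof -
  have "qf m S (\<lambda>a. (if a = j then 1 else 0) - 1 * (if a = k then 1 else 0)) =
     qf m S (\<lambda>a. if a = j then 1 else 0) - 1 * S j k - 1 * S k j + 1^2 * qf m S (\<lambda>a. if a = k then 1 else 0)"
    unfolding qf_sub bil_ind[OF assms] bil_ind[OF assms(2,1)] ..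
  also have "qf m S (\<lambda>a. if a = j then 1 else 0) = S j j" unfolding qf_def by (rule bil_ind[OF assms(1,1)])
  also have "qf m S (\<lambda>a. if a = k then 1 else 0) = S k k" unfolding qf_def by (rule bil_ind[OF assms(2,2)])
  finally show ?thesis by simp
qed

lemma sum_pm_ind:
  fixes i l n :: nat and D :: "nat \<Rightarrow> real"
  assumes "i < n" "l < n"
  shows "(\<Sum>a<n. ((if a = i then 1 else 0) + (if a = l then 1 else 0)) * D a) = D i + D l"
    "(\<Sum>a<n. ((if a = i then 1 else 0) - (if a = l then 1 else 0)) * D a) = D i - D l"
proof -
  show "(\<Sum>a<n. ((if a = i then 1 else 0) + (if a = l then 1 else 0)) * D a) = D i + D l"
    by (simp add: distrib_right sum.distrib sdelta1[OF assms(1)] sdelta1[OF assms(2)])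
  show "(\<Sum>a<n. ((if a = i then 1 else 0) - (if a = l then 1 else 0)) * D a) = D i - D l"
    by (simp add: left_diff_distrib sum_subtractf sdelta1[OF assms(1)] sdelta1[OF assms(2)])
qed


context
  fixes M :: "'a measure" and X :: "'a \<Rightarrow> nat \<Rightarrow> real" and n :: nat
    and Gm P :: "nat \<Rightarrow> nat \<Rightarrow> real"
  assumes PM: "prob_space M" and pdG: "pos_def_mat (Suc n) Gm"
    and Xm: "X \<in> measurable M (LL (Suc n))"
    and PD: "P = minv (Suc n) Gm"
    and dX: "distr M (LL (Suc n)) X = G (Suc n) P"
begin

lemma pdP: "pos_def_mat (Suc n) P" unfolding PD by (rule pd_minv(2)[OF pdG])
lemma invPG: "isinv (Suc n) P Gm" unfolding PD by (rule isinv_swap[OF pd_minv(1)[OF pdG]])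
lemma syG: "symm (Suc n) Gm" by (rule pd_symm[OF pdG])

lemma nnM: "g \<in> borel_measurable (LL (Suc n)) \<Longrightarrow> (\<integral>\<^sup>+\<omega>. g (X \<omega>) \<partial>M) = (\<integral>\<^sup>+y. g y \<partial>G (Suc n) P)"
  using nn_integral_distr[OF Xm, of g] dX by simp

lemma intM: fixes g :: "(nat \<Rightarrow> real) \<Rightarrow> real" shows "g \<in> borel_measurable (LL (Suc n)) \<Longrightarrow> (\<integral>\<omega>. g (X \<omega>) \<partial>M) = (\<integral>y. g y \<partial>G (Suc n) P)"
  using integral_distr[OF Xm, of g] dX by simp

lemma integM: fixes g :: "(nat \<Rightarrow> real) \<Rightarrow> real" shows "g \<in> borel_measurable (LL (Suc n)) \<Longrightarrow> integrable (G (Suc n) P) g \<Longrightarrow> integrable M (\<lambda>\<omega>. g (X \<omega>))"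
  using integrable_distr_eq[OF Xm, of g] dX by simp

lemma diff_meas: "j < Suc n \<Longrightarrow> k < Suc n \<Longrightarrow> (\<lambda>y. y j - y k) \<in> borel_measurable (LL (Suc n))"
  by (intro borel_measurable_diff comp_meas)

lemma sqD_G:
  assumes j: "j < Suc n" and k: "k < Suc n"
  shows "(\<integral>\<^sup>+y. ennreal ((y j - y k)^2) \<partial>G (Suc n) P) = ennreal (Gm j j + Gm k k - Gm j k - Gm k j)"
  using mom[OF pdP invPG, of "\<lambda>a. (if a = j then 1 else 0) - (if a = k then 1 else 0)"]
  unfolding lin_ind[OF j k] qf_diff_ind[OF j k] .

lemma meanD:
  assumes j: "j < Suc n" and k: "k < Suc n"
  shows "(\<integral>\<omega>. X \<omega> j - X \<omega> k \<partial>M) = 0" "integrable M (\<lambda>\<omega>. X \<omega> j - X \<omega> k)"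
    "integrable M (\<lambda>\<omega>. (X \<omega> j - X \<omega> k)^2)"
proof -
  interpret GP: prob_space "G (Suc n) P" by (rule prob_G[OF pdP])
  let ?c = "\<lambda>a. (if a = j then 1 else 0) - (if a = k then 1 else 0)"
  have le: "lin (Suc n) ?c y = y j - y k" for y by (rule lin_ind[OF j k])
  have fin: "(\<integral>\<^sup>+y. ennreal ((y j - y k)^2) \<partial>G (Suc n) P) < \<infinity>" by (simp add: sqD_G[OF j k])
  have i1: "integrable (G (Suc n) P) (\<lambda>y. y j - y k)"
    by (rule sq_int(2)[OF GP.prob_space_axioms _ fin]) (use diff_meas[OF j k] in simp)
  have i2: "integrable (G (Suc n) P) (\<lambda>y. (y j - y k)^2)"
    by (rule sq_int(1)[OF GP.prob_space_axioms _ fin]) (use diff_meas[OF j k] in simp)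
  have "(\<integral>y. lin (Suc n) ?c y \<partial>G (Suc n) P) = 0" by (rule G_mean0) (use i1 in \<open>simp add: le\<close>)
  thus "(\<integral>\<omega>. X \<omega> j - X \<omega> k \<partial>M) = 0" by (simp add: intM[OF diff_meas[OF j k]] le)
  show "integrable M (\<lambda>\<omega>. X \<omega> j - X \<omega> k)" by (rule integM[OF diff_meas[OF j k] i1])
  show "integrable M (\<lambda>\<omega>. (X \<omega> j - X \<omega> k)^2)"
    using integM[OF _ i2] diff_meas[OF j k] by simp
qed

lemma varD:
  assumes j: "j \<le> n" and i: "i < n"
  shows "var M (\<lambda>\<omega>. X \<omega> j - X \<omega> (skip j i)) = Gm j j + Gm (skip j i) (skip j i) - 2 * Gm (skip j i) j"
proof -
  define k where "k = skip j i"
  have jj: "j < Suc n" using j by simp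
  have k: "k < Suc n" unfolding k_def using skip_lt[OF i] .
  have "var M (\<lambda>\<omega>. X \<omega> j - X \<omega> k) = (\<integral>\<omega>. (X \<omega> j - X \<omega> k)^2 \<partial>M)"
    unfolding var_def covar_def meanD(1)[OF jj k] by (simp add: power2_eq_square)
  also have "\<dots> = (\<integral>y. (y j - y k)^2 \<partial>G (Suc n) P)"
    by (rule intM) (use diff_meas[OF jj k] in simp)
  also have "\<dots> = enn2real (\<integral>\<^sup>+y. ennreal ((y j - y k)^2) \<partial>G (Suc n) P)"
    by (rule integral_eq_nn_integral) (use diff_meas[OF jj k] in auto)
  also have "\<dots> = Gm j j + Gm k k - Gm j k - Gm k j"
  proof -
    have "0 \<le> Gm j j + Gm k k - Gm j k - Gm k j"
      using pd_qf_nonneg[OF pdG, of "\<lambda>a. (if a = j then 1 else 0) - (if a = k then 1 else 0)"]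
      unfolding qf_diff_ind[OF jj k] .
    thus ?thesis by (simp add: sqD_G[OF jj k])
  qed
  also have "\<dots> = Gm j j + Gm k k - 2 * Gm k j" using syG jj k unfolding symm_def by simp
  finally show ?thesis unfolding k_def .
qed

lemma Dsum_meas:
  assumes j: "j \<le> n"
  shows "(\<lambda>y. \<Sum>i<n. c i * (y j - y (skip j i))) \<in> borel_measurable (LL (Suc n))"
  using j skip_lt[of _ n j]
  by (intro borel_measurable_sum borel_measurable_times borel_measurable_const borel_measurable_diff comp_meas) auto

lemma sqmomQ:
  assumes j: "j \<le> n"
  shows "(\<integral>\<^sup>+\<omega>. ennreal ((\<Sum>i<n. c i * (X \<omega> j - X \<omega> (skip j i)))^2) \<partial>M)
       = ennreal (qf n (minv (Suc n) (QQ j n P)) c)"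
proof -
  let ?Q = "QQ j n P"
  let ?S = "minv (Suc n) ?Q"
  have pdQ: "pos_def_mat (Suc n) ?Q" by (rule pd_QQ[OF pdP j])
  define c' where "c' a = (if a < n then c a else 0)" for a
  have dm: "(\<lambda>y. ennreal ((\<Sum>i<n. c i * (y j - y (skip j i)))^2)) \<in> borel_measurable (LL (Suc n))"
    using Dsum_meas[OF j, of c] by measurable
  have tz: "Tm j n z j - Tm j n z (skip j i) = z i" if "i < n" for z i
    using fun_cong[OF Tm_delta[OF j, of z], of i] that by simp
  have "(\<integral>\<^sup>+\<omega>. ennreal ((\<Sum>i<n. c i * (X \<omega> j - X \<omega> (skip j i)))^2) \<partial>M)
      = (\<integral>\<^sup>+y. ennreal ((\<Sum>i<n. c i * (y j - y (skip j i)))^2) \<partial>G (Suc n) P)"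
    by (rule nnM[OF dm])
  also have "\<dots> = (\<integral>\<^sup>+z. ennreal ((\<Sum>i<n. c i * (Tm j n z j - Tm j n z (skip j i)))^2) \<partial>G (Suc n) ?Q)"
    by (rule G_transform[OF pdP j dm])
  also have "\<dots> = (\<integral>\<^sup>+z. ennreal ((lin (Suc n) c' z)^2) \<partial>G (Suc n) ?Q)"
  proof (rule nn_integral_cong)
    fix z
    have "(\<Sum>i<n. c i * (Tm j n z j - Tm j n z (skip j i))) = lin (Suc n) c' z"
      unfolding lin_def c'_def by (simp add: tz)
    thus "ennreal ((\<Sum>i<n. c i * (Tm j n z j - Tm j n z (skip j i)))^2) = ennreal ((lin (Suc n) c' z)^2)" by simp
  qed
  also have "\<dots> = ennreal (qf (Suc n) ?S c')" by (rule mom[OF pdQ pd_minv(1)[OF pdQ]])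
  also have "qf (Suc n) ?S c' = qf n ?S c"
  proof -
    have "qf n ?S c' = qf n ?S c" by (rule qf_cong) (simp add: c'_def)
    thus ?thesis by (simp add: qf_Suc c'_def)
  qed
  finally show ?thesis .
qed

lemma covD:
  assumes j: "j \<le> n" and i: "i < n" and l: "l < n"
  shows "covar M (\<lambda>\<omega>. X \<omega> j - X \<omega> (skip j i)) (\<lambda>\<omega>. X \<omega> j - X \<omega> (skip j l)) = minv (Suc n) (QQ j n P) i l"
proof -
  let ?Q = "QQ j n P"
  let ?S = "minv (Suc n) ?Q"
  have pdQ: "pos_def_mat (Suc n) ?Q" by (rule pd_QQ[OF pdP j])
  have syS: "symm (Suc n) ?S" by (rule isinv_symm[OF pd_minv(1)[OF pdQ] pd_symm[OF pdQ]])
  hence syS': "symm n ?S" unfolding symm_def by auto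
  have jj: "j < Suc n" using j by simp
  define A where "A \<omega> = X \<omega> j - X \<omega> (skip j i)" for \<omega>
  define B where "B \<omega> = X \<omega> j - X \<omega> (skip j l)" for \<omega>
  define cp where "cp a = (if a = i then 1 else 0) + (if a = l then (1::real) else 0)" for a
  define cm where "cm a = (if a = i then 1 else 0) - (if a = l then (1::real) else 0)" for a
  have sp: "(\<Sum>a<n. cp a * (X \<omega> j - X \<omega> (skip j a))) = A \<omega> + B \<omega>" for \<omega>
    unfolding cp_def A_def B_def by (rule sum_pm_ind(1)[OF i l])
  have sm: "(\<Sum>a<n. cm a * (X \<omega> j - X \<omega> (skip j a))) = A \<omega> - B \<omega>" for \<omega>
    unfolding cm_def A_def B_def by (rule sum_pm_ind(2)[OF i l])
  have nnp: "(\<integral>\<^sup>+\<omega>. ennreal ((A \<omega> + B \<omega>)^2) \<partial>M) = ennreal (qf n ?S cp)"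
    using sqmomQ[OF j, of cp] unfolding sp .
  have nnm: "(\<integral>\<^sup>+\<omega>. ennreal ((A \<omega> - B \<omega>)^2) \<partial>M) = ennreal (qf n ?S cm)"
    using sqmomQ[OF j, of cm] unfolding sm .
  have Am: "A \<in> borel_measurable M" unfolding A_def
    using measurable_comp[OF Xm diff_meas[OF jj skip_lt[OF i]]] by (simp add: comp_def)
  have Bm: "B \<in> borel_measurable M" unfolding B_def
    using measurable_comp[OF Xm diff_meas[OF jj skip_lt[OF l]]] by (simp add: comp_def)
  have ip: "integrable M (\<lambda>\<omega>. (A \<omega> + B \<omega>)^2)"
    by (rule sq_int(1)[OF PM]) (use Am Bm nnp in auto)
  have im: "integrable M (\<lambda>\<omega>. (A \<omega> - B \<omega>)^2)"
    by (rule sq_int(1)[OF PM]) (use Am Bm nnm in auto)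
  have vp: "(\<integral>\<omega>. (A \<omega> + B \<omega>)^2 \<partial>M) = qf n ?S cp"
  proof -
    have "(\<integral>\<omega>. (A \<omega> + B \<omega>)^2 \<partial>M) = enn2real (\<integral>\<^sup>+\<omega>. ennreal ((A \<omega> + B \<omega>)^2) \<partial>M)"
      by (rule integral_eq_nn_integral) (use Am Bm in auto)
    thus ?thesis using nnp pd_qf_nonneg[OF pd_inv_pd[OF pd_schur[OF pdQ] isinv_schur[OF pd_minv(1)[OF pdQ]]], of cp]
      pd_diag[OF pdQ] by simp
  qed
  have vm: "(\<integral>\<omega>. (A \<omega> - B \<omega>)^2 \<partial>M) = qf n ?S cm"
  proof -
    have "(\<integral>\<omega>. (A \<omega> - B \<omega>)^2 \<partial>M) = enn2real (\<integral>\<^sup>+\<omega>. ennreal ((A \<omega> - B \<omega>)^2) \<partial>M)"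
      by (rule integral_eq_nn_integral) (use Am Bm in auto)
    thus ?thesis using nnm pd_qf_nonneg[OF pd_inv_pd[OF pd_schur[OF pdQ] isinv_schur[OF pd_minv(1)[OF pdQ]]], of cm]
      pd_diag[OF pdQ] by simp
  qed
  have "covar M A B = (\<integral>\<omega>. A \<omega> * B \<omega> \<partial>M)"
    unfolding covar_def A_def B_def meanD(1)[OF jj skip_lt[OF i]] meanD(1)[OF jj skip_lt[OF l]] by simp
  also have "\<dots> = (\<integral>\<omega>. ((A \<omega> + B \<omega>)^2 - (A \<omega> - B \<omega>)^2) / 4 \<partial>M)"
    by (rule Bochner_Integration.integral_cong) (auto simp: power2_eq_square algebra_simps)
  also have "\<dots> = ((\<integral>\<omega>. (A \<omega> + B \<omega>)^2 \<partial>M) - (\<integral>\<omega>. (A \<omega> - B \<omega>)^2 \<partial>M)) / 4"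
    using ip im by simp
  also have "\<dots> = (qf n ?S cp - qf n ?S cm) / 4" unfolding vp vm ..
  also have "\<dots> = ?S i l" unfolding cp_def cm_def qf_pol_ind[OF syS' i l] by simp
  finally show ?thesis unfolding A_def B_def .
qed

end


lemma isinv_cong:
  assumes "isinv n P S" "\<And>i k. i < n \<Longrightarrow> k < n \<Longrightarrow> S i k = S' i k"
  shows "isinv n P S'"
proof -
  have "(\<Sum>l<n. P i l * S l k) = (\<Sum>l<n. P i l * S' l k)" if "k < n" for i k
    using assms(2) that by (intro sum.cong) auto
  moreover have "(\<Sum>l<n. S i l * P l k) = (\<Sum>l<n. S' i l * P l k)" if "i < n" for i k
    using assms(2) that by (intro sum.cong) auto
  ultimately show ?thesis using assms(1) unfolding isinv_def by simp
qed

definition bth :: "(nat \<Rightarrow> nat \<Rightarrow> real) \<Rightarrow> nat \<Rightarrow> nat \<Rightarrow> real" where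
  "bth Gm j i = - (Gm j j + Gm (skip j i) (skip j i) - 2 * Gm (skip j i) j) / 2"

context
  fixes M :: "'a measure" and X :: "'a \<Rightarrow> nat \<Rightarrow> real" and n :: nat
    and Gm P :: "nat \<Rightarrow> nat \<Rightarrow> real"
  assumes PM: "prob_space M" and pdG: "pos_def_mat (Suc n) Gm"
    and Xm: "X \<in> measurable M (LL (Suc n))"
    and PD: "P = minv (Suc n) Gm"
    and dX: "distr M (LL (Suc n)) X = G (Suc n) P"
begin

lemmas ctx = PM pdG Xm PD dX

lemma rhs_term:
  assumes j: "j \<le> n"
  shows "Phi n (\<lambda>i. - (1 / 2) * var M (\<lambda>\<omega>. X \<omega> j - X \<omega> (skip j i)))
        (\<lambda>i l. covar M (\<lambda>\<omega>. X \<omega> j - X \<omega> (skip j i)) (\<lambda>\<omega>. X \<omega> j - X \<omega> (skip j l)))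
     = measure (G n (schur n (QQ j n P))) (Pi\<^sub>E {..<n} (\<lambda>i. {..bth Gm j i}))"
proof -
  let ?Q = "QQ j n P"
  let ?Q' = "schur n ?Q"
  let ?S = "minv (Suc n) ?Q"
  define C where "C i l = covar M (\<lambda>\<omega>. X \<omega> j - X \<omega> (skip j i)) (\<lambda>\<omega>. X \<omega> j - X \<omega> (skip j l))" for i l
  have pdP: "pos_def_mat (Suc n) P" by (rule pdP[OF ctx])
  have pdQ: "pos_def_mat (Suc n) ?Q" by (rule pd_QQ[OF pdP j])
  have p: "?Q n n \<noteq> 0" using pd_diag[OF pdQ] by simp
  have invS: "isinv n ?Q' ?S" by (rule isinv_schur[OF pd_minv(1)[OF pdQ] p])
  have CS: "C i l = ?S i l" if "i < n" "l < n" for i l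
    unfolding C_def by (rule covD[OF ctx j that])
  have invC: "isinv n ?Q' C" by (rule isinv_cong[OF invS]) (simp add: CS)
  have pdC: "pos_def_mat n C" by (rule pd_inv_pd[OF pd_schur[OF pdQ] invC])
  have mC: "minv n C i k = ?Q' i k" if "i < n" "k < n" for i k
    by (rule isinv_unique[OF pd_minv(1)[OF pdC] isinv_swap[OF invC] that])
  have gmC: "gauss_measure n C = G n ?Q'"
    unfolding gm_eq[OF pdC] by (rule G_cong) (simp add: mC)
  have box: "{x \<in> space (LL n). \<forall>i<n. x i \<le> - (1 / 2) * var M (\<lambda>\<omega>. X \<omega> j - X \<omega> (skip j i))}
      = Pi\<^sub>E {..<n} (\<lambda>i. {..bth Gm j i})"
  proof -
    have ab: "- (1 / 2) * var M (\<lambda>\<omega>. X \<omega> j - X \<omega> (skip j i)) = bth Gm j i" if "i < n" for i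
      unfolding bth_def varD[OF ctx j that] by linarith
    show ?thesis using ab by (auto simp: space_PiM PiE_def Pi_def)
  qed
  show ?thesis unfolding Phi_def C_def[symmetric] gmC box ..
qed

end

lemma lhs_nn:
  assumes pdP: "pos_def_mat (Suc n) P" and inv: "isinv (Suc n) P Gm" and sy: "symm (Suc n) Gm"
  shows "(\<integral>\<^sup>+y. ennreal (Min ((\<lambda>j. exp (y j - Gm j j / 2)) ` {..<Suc n})) \<partial>G (Suc n) P)
    = (\<Sum>j<Suc n. emeasure (G n (schur n (QQ j n P))) (Pi\<^sub>E {..<n} (\<lambda>i. {..bth Gm j i})))"
proof -
  define B where "B j = Pi\<^sub>E {..<n} (\<lambda>i. if i < j then {..<bth Gm j i} else {..bth Gm j i})" for j
  define F where "F j y = (\<lambda>i\<in>{..<n}. (y j - Gm j j) - (y (skip j i) - Gm (skip j i) j))" for j and y :: "nat \<Rightarrow> real"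
  define f where "f j y = (indicator (B j) (F j y) :: ennreal)" for j y
  have Bs: "B j \<in> sets (LL n)" for j unfolding B_def by (rule sets_PiM_I_finite) auto
  have Fm: "F j \<in> measurable (LL (Suc n)) (LL n)" if j: "j < Suc n" for j
    unfolding F_def
  proof (rule measurable_restrict)
    fix i assume i: "i \<in> {..<n}"
    show "(\<lambda>y. (y j - Gm j j) - (y (skip j i) - Gm (skip j i) j)) \<in> measurable (LL (Suc n)) lborel"
      unfolding measurable_lborel1 using j i skip_lt[of i n j]
      by (intro borel_measurable_diff borel_measurable_const comp_meas) auto
  qed
  have fm: "f j \<in> borel_measurable (LL (Suc n))" if j: "j < Suc n" for j
  proof -
    have "(\<lambda>u. indicator (B j) u :: ennreal) \<in> borel_measurable (LL n)" using Bs[of j] by measurable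
    from measurable_comp[OF Fm[OF j] this] show ?thesis unfolding f_def by (simp add: comp_def)
  qed
  have cond: "(\<forall>k<Suc n. y j - Gm j j / 2 \<le> y k - Gm k k / 2 \<and> (k < j \<longrightarrow> y j - Gm j j / 2 < y k - Gm k k / 2))
      \<longleftrightarrow> F j y \<in> B j" if j: "j < Suc n" for j y
  proof -
    define y' where "y' i = y i - Gm i j" for i
    have jn: "j \<le> n" using j by simp
    have "(\<forall>k<Suc n. (\<lambda>i\<in>{..<Suc n}. y' i + Gm i j) j - Gm j j / 2 \<le> (\<lambda>i\<in>{..<Suc n}. y' i + Gm i j) k - Gm k k / 2 \<and>
         (k < j \<longrightarrow> (\<lambda>i\<in>{..<Suc n}. y' i + Gm i j) j - Gm j j / 2 < (\<lambda>i\<in>{..<Suc n}. y' i + Gm i j) k - Gm k k / 2))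
      \<longleftrightarrow> (\<lambda>i\<in>{..<n}. y' j - y' (skip j i)) \<in> Pi\<^sub>E {..<n} (\<lambda>i. if i < j then {..<- (Gm j j + Gm (skip j i) (skip j i) - 2 * Gm (skip j i) j) / 2} else {..- (Gm j j + Gm (skip j i) (skip j i) - 2 * Gm (skip j i) j) / 2})"
      by (rule event[OF jn sy])
    moreover have "(\<lambda>i\<in>{..<n}. y' j - y' (skip j i)) = F j y" unfolding F_def y'_def ..
    moreover have "Pi\<^sub>E {..<n} (\<lambda>i. if i < j then {..<- (Gm j j + Gm (skip j i) (skip j i) - 2 * Gm (skip j i) j) / 2} else {..- (Gm j j + Gm (skip j i) (skip j i) - 2 * Gm (skip j i) j) / 2}) = B j"
      unfolding B_def bth_def ..
    moreover have "(\<lambda>i\<in>{..<Suc n}. y' i + Gm i j) k = y k" if "k < Suc n" for k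
      using that by (simp add: y'_def)
    ultimately show ?thesis using j by (simp add: y'_def)
  qed
  have pw: "ennreal (Min ((\<lambda>j. exp (y j - Gm j j / 2)) ` {..<Suc n})) = (\<Sum>j<Suc n. f j y * ennreal (exp (y j - Gm j j / 2)))" for y
  proof -
    have "Min ((\<lambda>j. exp (y j - Gm j j / 2)) ` {..<Suc n}) =
        (\<Sum>j<Suc n. if (\<forall>k<Suc n. y j - Gm j j / 2 \<le> y k - Gm k k / 2 \<and> (k < j \<longrightarrow> y j - Gm j j / 2 < y k - Gm k k / 2)) then exp (y j - Gm j j / 2) else 0)"
      by (rule min_decomp[of "Suc n" "\<lambda>k. y k - Gm k k / 2"]) simp
    also have "\<dots> = (\<Sum>j<Suc n. if F j y \<in> B j then exp (y j - Gm j j / 2) else 0)"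
      by (intro sum.cong refl) (simp add: cond)
    finally have "ennreal (Min ((\<lambda>j. exp (y j - Gm j j / 2)) ` {..<Suc n})) = ennreal (\<Sum>j<Suc n. if F j y \<in> B j then exp (y j - Gm j j / 2) else 0)"
      by simp
    also have "\<dots> = (\<Sum>j<Suc n. ennreal (if F j y \<in> B j then exp (y j - Gm j j / 2) else 0))"
      by (rule sum_ennreal[symmetric]) simp
    also have "\<dots> = (\<Sum>j<Suc n. f j y * ennreal (exp (y j - Gm j j / 2)))"
      by (intro sum.cong refl) (simp add: f_def indicator_def)
    finally show ?thesis .
  qed
  have "(\<integral>\<^sup>+y. ennreal (Min ((\<lambda>j. exp (y j - Gm j j / 2)) ` {..<Suc n})) \<partial>G (Suc n) P)
      = (\<integral>\<^sup>+y. (\<Sum>j<Suc n. f j y * ennreal (exp (y j - Gm j j / 2))) \<partial>G (Suc n) P)"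
    by (simp add: pw)
  also have "\<dots> = (\<Sum>j<Suc n. \<integral>\<^sup>+y. f j y * ennreal (exp (y j - Gm j j / 2)) \<partial>G (Suc n) P)"
  proof (rule nn_integral_sum)
    fix j assume j: "j \<in> {..<Suc n}"
    note cm[measurable] = comp_meas[of j "Suc n"]
    show "(\<lambda>y. f j y * ennreal (exp (y j - Gm j j / 2))) \<in> borel_measurable (G (Suc n) P)"
      using fm[of j] j by simp measurable
  qed
  also have "\<dots> = (\<Sum>j<Suc n. emeasure (G n (schur n (QQ j n P))) (Pi\<^sub>E {..<n} (\<lambda>i. {..bth Gm j i})))"
  proof (rule sum.cong[OF refl])
    fix j assume j: "j \<in> {..<Suc n}"
    hence j': "j < Suc n" "j \<le> n" by auto
    have "(\<integral>\<^sup>+y. f j y * ennreal (exp (y j - Gm j j / 2)) \<partial>G (Suc n) P) = (\<integral>\<^sup>+y. f j (\<lambda>i\<in>{..<Suc n}. y i + Gm i j) \<partial>G (Suc n) P)"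
      by (rule shift[OF pdP inv j'(1) fm[OF j'(1)]])
    also have "\<dots> = (\<integral>\<^sup>+y. indicator (B j) (\<lambda>i\<in>{..<n}. y j - y (skip j i)) \<partial>G (Suc n) P)"
    proof (rule nn_integral_cong)
      fix y :: "nat \<Rightarrow> real"
      have "F j (\<lambda>i\<in>{..<Suc n}. y i + Gm i j) = (\<lambda>i\<in>{..<n}. y j - y (skip j i))"
        unfolding F_def using j'(1) skip_lt[of _ n j] by (intro ext) auto
      thus "f j (\<lambda>i\<in>{..<Suc n}. y i + Gm i j) = indicator (B j) (\<lambda>i\<in>{..<n}. y j - y (skip j i))"
        unfolding f_def by simp
    qed
    also have "\<dots> = emeasure (G n (schur n (QQ j n P))) (Pi\<^sub>E {..<n} (\<lambda>i. {..bth Gm j i}))"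
      unfolding B_def by (rule prob_delta[OF pdP j'(2)])
    finally show "(\<integral>\<^sup>+y. f j y * ennreal (exp (y j - Gm j j / 2)) \<partial>G (Suc n) P) = emeasure (G n (schur n (QQ j n P))) (Pi\<^sub>E {..<n} (\<lambda>i. {..bth Gm j i}))" .
  qed
  finally show ?thesis .
qed


theorem lemmaB1:
  fixes M :: "'a measure" and X :: "'a \<Rightarrow> nat \<Rightarrow> real"
    and d :: nat and \<Gamma> :: "nat \<Rightarrow> nat \<Rightarrow> real"
  assumes "prob_space M"
    and "d \<ge> 2"
    and "pos_def_mat d \<Gamma>"
    and "distributed M (PiM {..<d} (\<lambda>_. lborel)) X (\<lambda>x. ennreal (gauss_density d \<Gamma> x))"
  shows "(\<integral>\<omega>. Min ((\<lambda>j. exp (X \<omega> j - \<Gamma> j j / 2)) ` {..<d}) \<partial>M) =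
    (\<Sum>j<d. Phi (d - 1)
        (\<lambda>i. - (1 / 2) * var M (\<lambda>\<omega>. X \<omega> j - X \<omega> (skip j i)))
        (\<lambda>i l. covar M (\<lambda>\<omega>. X \<omega> j - X \<omega> (skip j i)) (\<lambda>\<omega>. X \<omega> j - X \<omega> (skip j l))))"
proof -
  obtain n where dn: "d = Suc n" using assms(2) by (cases d) auto
  have pdG: "pos_def_mat (Suc n) \<Gamma>" using assms(3) dn by simp
  define P where "P = minv (Suc n) \<Gamma>"
  have Xm: "X \<in> measurable M (LL (Suc n))" using distributed_measurable[OF assms(4)] dn by simp
  have dX: "distr M (LL (Suc n)) X = G (Suc n) P"
    using distributed_distr_eq_density[OF assms(4)] dn gd_eq[OF pdG] unfolding G_def P_def by simp
  note ctx = assms(1) pdG Xm P_def dX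
  have pdP: "pos_def_mat (Suc n) P" by (rule pdP[OF ctx])
  define mn where "mn y = Min ((\<lambda>j. exp (y j - \<Gamma> j j / 2)) ` {..<Suc n})" for y :: "nat \<Rightarrow> real"
  have mnm: "mn \<in> borel_measurable (LL (Suc n))"
    unfolding mn_def
    by (rule borel_measurable_Min) (auto intro!: borel_measurable_exp borel_measurable_diff comp_meas)
  have mnp: "0 \<le> mn y" for y
    unfolding mn_def by (subst Min_ge_iff) auto
  have pq: "prob_space (G n (schur n (QQ j n P)))" if "j < Suc n" for j
    by (rule prob_G[OF pd_schur[OF pd_QQ[OF pdP]]]) (use that in simp)
  have "(\<integral>\<omega>. Min ((\<lambda>j. exp (X \<omega> j - \<Gamma> j j / 2)) ` {..<d}) \<partial>M) = (\<integral>\<omega>. mn (X \<omega>) \<partial>M)"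
    unfolding mn_def dn ..
  also have "\<dots> = (\<integral>y. mn y \<partial>G (Suc n) P)" by (rule intM[OF ctx mnm])
  also have "\<dots> = enn2real (\<integral>\<^sup>+y. ennreal (mn y) \<partial>G (Suc n) P)"
    by (rule integral_eq_nn_integral) (use mnm mnp in auto)
  also have "(\<integral>\<^sup>+y. ennreal (mn y) \<partial>G (Suc n) P) =
      (\<Sum>j<Suc n. emeasure (G n (schur n (QQ j n P))) (Pi\<^sub>E {..<n} (\<lambda>i. {..bth \<Gamma> j i})))"
    unfolding mn_def by (rule lhs_nn[OF pdP invPG[OF ctx] syG[OF ctx]])
  also have "\<dots> = (\<Sum>j<Suc n. ennreal (measure (G n (schur n (QQ j n P))) (Pi\<^sub>E {..<n} (\<lambda>i. {..bth \<Gamma> j i}))))"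
  proof (rule sum.cong[OF refl])
    fix j assume "j \<in> {..<Suc n}"
    then interpret Q: prob_space "G n (schur n (QQ j n P))" using pq by simp
    show "emeasure (G n (schur n (QQ j n P))) (Pi\<^sub>E {..<n} (\<lambda>i. {..bth \<Gamma> j i})) =
        ennreal (measure (G n (schur n (QQ j n P))) (Pi\<^sub>E {..<n} (\<lambda>i. {..bth \<Gamma> j i})))"
      by (rule Q.emeasure_eq_measure)
  qed
  also have "\<dots> = ennreal (\<Sum>j<Suc n. measure (G n (schur n (QQ j n P))) (Pi\<^sub>E {..<n} (\<lambda>i. {..bth \<Gamma> j i})))"
    by (rule sum_ennreal) simp
  also have "enn2real \<dots> = (\<Sum>j<Suc n. measure (G n (schur n (QQ j n P))) (Pi\<^sub>E {..<n} (\<lambda>i. {..bth \<Gamma> j i})))"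
    by (rule enn2real_ennreal) (simp add: sum_nonneg)
  also have "\<dots> = (\<Sum>j<d. Phi (d - 1)
        (\<lambda>i. - (1 / 2) * var M (\<lambda>\<omega>. X \<omega> j - X \<omega> (skip j i)))
        (\<lambda>i l. covar M (\<lambda>\<omega>. X \<omega> j - X \<omega> (skip j i)) (\<lambda>\<omega>. X \<omega> j - X \<omega> (skip j l))))"
    unfolding dn
  proof (rule sum.cong[OF refl])
    fix j assume "j \<in> {..<Suc n}"
    hence jn: "j \<le> n" by simp
    show "measure (G n (schur n (QQ j n P))) (Pi\<^sub>E {..<n} (\<lambda>i. {..bth \<Gamma> j i})) = Phi (Suc n - 1)
        (\<lambda>i. - (1 / 2) * var M (\<lambda>\<omega>. X \<omega> j - X \<omega> (skip j i)))
        (\<lambda>i l. covar M (\<lambda>\<omega>. X \<omega> j - X \<omega> (skip j i)) (\<lambda>\<omega>. X \<omega> j - X \<omega> (skip j l)))"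
      by (simp only: diff_Suc_1 rhs_term[OF ctx jn])
  qed
  finally show ?thesis .
qed


end
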